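(* Let $\mathcal A$ be a weakly idempotent complete additive category and let $M$ be a duplicial module in $\mathcal A$. For each $n\ge0$ let $N_n(M)$, $\iota_n:N_n(M)\to M_n$, $r_n:M_n\to N_n(M)$ be a splitting of the idempotent $p_n$ (so $r_n\iota_n=1$, $\iota_n r_n=p_n$), and define the restrictions $\kappa_n|_{N}=r_n\kappa_n\iota_n$ and $\pi_n|_{N}=r_n\pi_n\iota_n$, endomorphisms of $N_n(M)$. Then: (i) $M$ is paracyclic (i.e. $t_n$ is invertible for every $n\ge0$; equivalently $M$ extends to a functor $\Lambda_\infty^{op}\to\mathcal A$) if and only if $\kappa_n|_N$ is invertible for every $n\ge0$; (ii) $M$ is cyclic (i.e. $T_n=t_n^{n+1}=1_{M_n}$ for every $n\ge0$) if and only if $\pi_n|_N$ is the identity of $N_n(M)$ for every $n\ge0$.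
   Context: Let $\mathcal A$ be a pre-additive category (enriched in abelian groups). Let $\Lambda_\infty$ be the category with objects $[n]$, $n\ge0$, where $\Lambda_\infty([m],[n])$ is the set of weakly monotone maps $f:\mathbb Z\to\mathbb Z$ with $f(j+m+1)=f(j)+n+1$ for all $j$ (such $f$ is determined by its values on $\{0,\dots,m\}$). Let $\Lambda_+\subset\Lambda_\infty$ be the subcategory of those $f$ with $f(0)\ge0$, and $\Delta\subset\Lambda_+$ the subcategory of those $f$ with $f(0)\ge0$ and $f(m)\le n$. Define $\varepsilon^n_i:[n-1]\to[n]$ ($n\ge1$, $0\le i\le n$) by $\varepsilon^n_i(j)=j$ for $0\le j<i$, $\varepsilon^n_i(j)=j+1$ for $i\le j\le n-1$; $\eta^n_i:[n+1]\to[n]$ ($0\le i\le n+1$) by $\eta^n_i(j)=j$ for $0\le j\le i$, $\eta^n_i(j)=j-1$ for $i<j\le n+1$ (these lie in $\Delta$ for $i\le n$, and $\eta^n_{n+1}\in\Lambda_+$); and $\tau_n:[n]\to[n]$, $\tau_n(j)=j+1$, which equals $\eta^n_{n+1}\varepsilon^{n+1}_0$. $\Lambda_\infty$ is obtained from $\Lambda_+$ by inverting the $\tau_n$. A duplicial module is a functor $M:\Lambda_+^{op}\to\mathcal A$, a simplicial module a functor $\Delta^{op}\to\mathcal A$; a duplicial module restricts to a simplicial one. Write $M_n=M([n])$, $\partial_{n,i}=M(\varepsilon^n_i):M_n\to M_{n-1}$, $s_{n,i}=M(\eta^n_i):M_n\to M_{n+1}$, $t_n=M(\tau_n)=\partial_{n+1,0}s_{n,n+1}$,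 $T_n=t_n^{n+1}$. Convention: $M_{-1}=0$ and maps into or out of it are $0$. Operators: $p_n=(1-s_{n-1,0}\partial_{n,1})(1-s_{n-1,1}\partial_{n,2})\cdots(1-s_{n-1,n-1}\partial_{n,n})$ (an idempotent on $M_n$; $p_0=1$); Karoubi operator $\kappa_n=(-1)^n(\partial_{n+1,0}s_{n,n+1}-s_{n-1,n}\partial_{n,0})$ (so $\kappa_0=\partial_{1,0}s_{0,1}$); Dwyer–Kan operator $\pi_n=(-1)^n\partial_{n+1,0}\kappa_{n+1}^n s_{n,n+1}$. A pre-additive category is weakly idempotent complete if every morphism $f$ admitting a $g$ with $fg=1$ has a kernel. An idempotent $p$ on $A$ splits if there are $\iota:N\to A$, $r:A\to N$ with $r\iota=1_N$, $\iota r=p$. *)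

theory Defs
  imports Main
begin

record ('o, 'm) cat_data =
  c_ob  :: "'o set"
  c_ar  :: "'m set"
  c_dom :: "'m \<Rightarrow> 'o"
  c_cod :: "'m \<Rightarrow> 'o"
  c_cmp :: "'m \<Rightarrow> 'm \<Rightarrow> 'm"   (* c_cmp g f = g \<circ> f *)
  c_idt :: "'o \<Rightarrow> 'm"
  c_pls :: "'m \<Rightarrow> 'm \<Rightarrow> 'm"
  c_zer :: "'o \<Rightarrow> 'o \<Rightarrow> 'm"
  c_ngt :: "'m \<Rightarrow> 'm"

definition hom :: "('o, 'm) cat_data \<Rightarrow> 'o \<Rightarrow> 'o \<Rightarrow> 'm set" where
  "hom C a b = {f \<in> c_ar C. c_dom C f = a \<and> c_cod C f = b}"

definition msub :: "('o, 'm) cat_data \<Rightarrow> 'm \<Rightarrow> 'm \<Rightarrow> 'm" where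
  "msub C f g = c_pls C f (c_ngt C g)"

definition preadditive :: "('o, 'm) cat_data \<Rightarrow> bool" where
  "preadditive C \<longleftrightarrow>
     (\<forall>f \<in> c_ar C. c_dom C f \<in> c_ob C \<and> c_cod C f \<in> c_ob C)
   \<and> (\<forall>a \<in> c_ob C. c_idt C a \<in> hom C a a)
   \<and> (\<forall>a \<in> c_ob C. \<forall>b \<in> c_ob C. \<forall>c \<in> c_ob C. \<forall>f \<in> hom C a b. \<forall>g \<in> hom C b c.
         c_cmp C g f \<in> hom C a c)
   \<and> (\<forall>a \<in> c_ob C. \<forall>b \<in> c_ob C. \<forall>c \<in> c_ob C. \<forall>d \<in> c_ob C.
         \<forall>f \<in> hom C a b. \<forall>g \<in> hom C b c. \<forall>h \<in> hom C c d.
         c_cmp C h (c_cmp C g f) = c_cmp C (c_cmp C h g) f)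
   \<and> (\<forall>a \<in> c_ob C. \<forall>b \<in> c_ob C. \<forall>f \<in> hom C a b.
         c_cmp C f (c_idt C a) = f \<and> c_cmp C (c_idt C b) f = f)
   \<and> (\<forall>a \<in> c_ob C. \<forall>b \<in> c_ob C.
         c_zer C a b \<in> hom C a b
       \<and> (\<forall>f \<in> hom C a b. \<forall>g \<in> hom C a b. c_pls C f g \<in> hom C a b)
       \<and> (\<forall>f \<in> hom C a b. c_ngt C f \<in> hom C a b)
       \<and> (\<forall>f \<in> hom C a b. \<forall>g \<in> hom C a b. \<forall>h \<in> hom C a b.
             c_pls C (c_pls C f g) h = c_pls C f (c_pls C g h))
       \<and> (\<forall>f \<in> hom C a b. \<forall>g \<in> hom C a b. c_pls C f g = c_pls C g f)
       \<and> (\<forall>f \<in> hom C a b. c_pls C f (c_zer C a b) = f)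
       \<and> (\<forall>f \<in> hom C a b. c_pls C f (c_ngt C f) = c_zer C a b))
   \<and> (\<forall>a \<in> c_ob C. \<forall>b \<in> c_ob C. \<forall>c \<in> c_ob C.
         \<forall>f \<in> hom C a b. \<forall>f' \<in> hom C a b. \<forall>g \<in> hom C b c. \<forall>g' \<in> hom C b c.
           c_cmp C g (c_pls C f f') = c_pls C (c_cmp C g f) (c_cmp C g f')
         \<and> c_cmp C (c_pls C g g') f = c_pls C (c_cmp C g f) (c_cmp C g' f))"

definition is_biproduct :: "('o, 'm) cat_data \<Rightarrow> 'o \<Rightarrow> 'o \<Rightarrow> 'o \<Rightarrow> bool" where
  "is_biproduct C a b c \<longleftrightarrow> c \<in> c_ob C \<and>
     (\<exists>i1 \<in> hom C a c. \<exists>i2 \<in> hom C b c. \<exists>p1 \<in> hom C c a. \<exists>p2 \<in> hom C c b.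
        c_cmp C p1 i1 = c_idt C a \<and> c_cmp C p2 i2 = c_idt C b
      \<and> c_cmp C p1 i2 = c_zer C b a \<and> c_cmp C p2 i1 = c_zer C a b
      \<and> c_pls C (c_cmp C i1 p1) (c_cmp C i2 p2) = c_idt C c)"

definition is_zero_object :: "('o, 'm) cat_data \<Rightarrow> 'o \<Rightarrow> bool" where
  "is_zero_object C z \<longleftrightarrow> z \<in> c_ob C \<and>
     (\<forall>a \<in> c_ob C. (\<exists>!f. f \<in> hom C z a) \<and> (\<exists>!f. f \<in> hom C a z))"

definition additive_cat :: "('o, 'm) cat_data \<Rightarrow> bool" where
  "additive_cat C \<longleftrightarrow> preadditive C \<and> (\<exists>z. is_zero_object C z)
     \<and> (\<forall>a \<in> c_ob C. \<forall>b \<in> c_ob C. \<exists>c. is_biproduct C a b c)"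

definition is_kernel :: "('o, 'm) cat_data \<Rightarrow> 'm \<Rightarrow> 'o \<Rightarrow> 'm \<Rightarrow> bool" where
  "is_kernel C f K k \<longleftrightarrow> K \<in> c_ob C \<and> k \<in> hom C K (c_dom C f)
     \<and> c_cmp C f k = c_zer C K (c_cod C f)
     \<and> (\<forall>X \<in> c_ob C. \<forall>x \<in> hom C X (c_dom C f). c_cmp C f x = c_zer C X (c_cod C f) \<longrightarrow>
           (\<exists>!u. u \<in> hom C X K \<and> c_cmp C k u = x))"

definition weakly_idem_complete :: "('o, 'm) cat_data \<Rightarrow> bool" where
  "weakly_idem_complete C \<longleftrightarrow>
     (\<forall>f \<in> c_ar C. (\<exists>g \<in> hom C (c_cod C f) (c_dom C f). c_cmp C f g = c_idt C (c_cod C f))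
        \<longrightarrow> (\<exists>K k. is_kernel C f K k))"

definition invertible :: "('o, 'm) cat_data \<Rightarrow> 'o \<Rightarrow> 'm \<Rightarrow> bool" where
  "invertible C a h \<longleftrightarrow> h \<in> hom C a a \<and>
     (\<exists>g \<in> hom C a a. c_cmp C g h = c_idt C a \<and> c_cmp C h g = c_idt C a)"

fun mpow :: "('o, 'm) cat_data \<Rightarrow> 'o \<Rightarrow> 'm \<Rightarrow> nat \<Rightarrow> 'm" where
  "mpow C a h 0 = c_idt C a"
| "mpow C a h (Suc k) = c_cmp C h (mpow C a h k)"

definition msgn :: "('o, 'm) cat_data \<Rightarrow> nat \<Rightarrow> 'm \<Rightarrow> 'm" where
  "msgn C n f = (if even n then f else c_ngt C f)"

definition lam_inf :: "nat \<Rightarrow> nat \<Rightarrow> (int \<Rightarrow> int) \<Rightarrow> bool" where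
  "lam_inf m n f \<longleftrightarrow> mono f \<and> (\<forall>j. f (j + int m + 1) = f j + int n + 1)"

definition lam_plus :: "nat \<Rightarrow> nat \<Rightarrow> (int \<Rightarrow> int) \<Rightarrow> bool" where
  "lam_plus m n f \<longleftrightarrow> lam_inf m n f \<and> f 0 \<ge> 0"

text \<open>Periodic extension of g given on {0..m} to an element of \<Lambda>_\<infinity>([m],[n]).\<close>
definition lext :: "nat \<Rightarrow> nat \<Rightarrow> (int \<Rightarrow> int) \<Rightarrow> int \<Rightarrow> int" where
  "lext m n g j = g (j mod int (m + 1)) + (j div int (m + 1)) * int (n + 1)"

definition eps :: "nat \<Rightarrow> nat \<Rightarrow> int \<Rightarrow> int" where
  "eps n i = lext (n - 1) n (\<lambda>j. if j < int i then j else j + 1)"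

definition eta :: "nat \<Rightarrow> nat \<Rightarrow> int \<Rightarrow> int" where
  "eta n i = lext (n + 1) n (\<lambda>j. if j \<le> int i then j else j - 1)"

definition tau :: "nat \<Rightarrow> int \<Rightarrow> int" where
  "tau n = (\<lambda>j. j + 1)"

text \<open>A duplicial module: a functor \<Lambda>_+^op \<rightarrow> C, given by objects Mo n = M([n]) and,
  for f \<in> \<Lambda>_+([m],[n]), the morphism Mm m n f = M(f) : M_n \<rightarrow> M_m.\<close>
definition duplicial :: "('o, 'm) cat_data \<Rightarrow> (nat \<Rightarrow> 'o) \<Rightarrow> (nat \<Rightarrow> nat \<Rightarrow> (int \<Rightarrow> int) \<Rightarrow> 'm) \<Rightarrow> bool" where
  "duplicial C Mo Mm \<longleftrightarrow>
     (\<forall>n. Mo n \<in> c_ob C)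
   \<and> (\<forall>m n f. lam_plus m n f \<longrightarrow> Mm m n f \<in> hom C (Mo n) (Mo m))
   \<and> (\<forall>n. Mm n n id = c_idt C (Mo n))
   \<and> (\<forall>l m n f g. lam_plus l m f \<longrightarrow> lam_plus m n g \<longrightarrow>
        Mm l n (g \<circ> f) = c_cmp C (Mm l m f) (Mm m n g))"

definition face :: "(nat \<Rightarrow> nat \<Rightarrow> (int \<Rightarrow> int) \<Rightarrow> 'm) \<Rightarrow> nat \<Rightarrow> nat \<Rightarrow> 'm" where
  "face Mm n i = Mm (n - 1) n (eps n i)"   (* \<partial>_{n,i} : M_n \<rightarrow> M_{n-1}, n \<ge> 1 *)

definition degen :: "(nat \<Rightarrow> nat \<Rightarrow> (int \<Rightarrow> int) \<Rightarrow> 'm) \<Rightarrow> nat \<Rightarrow> nat \<Rightarrow> 'm" where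
  "degen Mm n i = Mm (n + 1) n (eta n i)"

definition tmap :: "(nat \<Rightarrow> nat \<Rightarrow> (int \<Rightarrow> int) \<Rightarrow> 'm) \<Rightarrow> nat \<Rightarrow> 'm" where
  "tmap Mm n = Mm n n (tau n)"

definition paracyclic :: "('o, 'm) cat_data \<Rightarrow> (nat \<Rightarrow> 'o) \<Rightarrow> (nat \<Rightarrow> nat \<Rightarrow> (int \<Rightarrow> int) \<Rightarrow> 'm) \<Rightarrow> bool" where
  "paracyclic C Mo Mm \<longleftrightarrow> (\<forall>n. invertible C (Mo n) (tmap Mm n))"

definition cyclic :: "('o, 'm) cat_data \<Rightarrow> (nat \<Rightarrow> 'o) \<Rightarrow> (nat \<Rightarrow> nat \<Rightarrow> (int \<Rightarrow> int) \<Rightarrow> 'm) \<Rightarrow> bool" where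
  "cyclic C Mo Mm \<longleftrightarrow> (\<forall>n. mpow C (Mo n) (tmap Mm n) (n + 1) = c_idt C (Mo n))"

definition pfac :: "('o, 'm) cat_data \<Rightarrow> (nat \<Rightarrow> 'o) \<Rightarrow> (nat \<Rightarrow> nat \<Rightarrow> (int \<Rightarrow> int) \<Rightarrow> 'm) \<Rightarrow> nat \<Rightarrow> nat \<Rightarrow> 'm" where
  "pfac C Mo Mm n i = msub C (c_idt C (Mo n)) (c_cmp C (degen Mm (n - 1) (i - 1)) (face Mm n i))"

fun pprod :: "('o, 'm) cat_data \<Rightarrow> (nat \<Rightarrow> 'o) \<Rightarrow> (nat \<Rightarrow> nat \<Rightarrow> (int \<Rightarrow> int) \<Rightarrow> 'm) \<Rightarrow> nat \<Rightarrow> nat \<Rightarrow> 'm" where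
  "pprod C Mo Mm n 0 = c_idt C (Mo n)"
| "pprod C Mo Mm n (Suc k) = c_cmp C (pprod C Mo Mm n k) (pfac C Mo Mm n (Suc k))"

definition pmap :: "('o, 'm) cat_data \<Rightarrow> (nat \<Rightarrow> 'o) \<Rightarrow> (nat \<Rightarrow> nat \<Rightarrow> (int \<Rightarrow> int) \<Rightarrow> 'm) \<Rightarrow> nat \<Rightarrow> 'm" where
  "pmap C Mo Mm n = pprod C Mo Mm n n"

text \<open>Karoubi operator; for n = 0 the term s_{-1,0}\<partial>_{0,0} is zero (M_{-1} = 0).\<close>
definition kappa :: "('o, 'm) cat_data \<Rightarrow> (nat \<Rightarrow> nat \<Rightarrow> (int \<Rightarrow> int) \<Rightarrow> 'm) \<Rightarrow> nat \<Rightarrow> 'm" where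
  "kappa C Mm n = msgn C n
     (if n = 0 then c_cmp C (face Mm 1 0) (degen Mm 0 1)
      else msub C (c_cmp C (face Mm (n + 1) 0) (degen Mm n (n + 1)))
                  (c_cmp C (degen Mm (n - 1) n) (face Mm n 0)))"

definition piop :: "('o, 'm) cat_data \<Rightarrow> (nat \<Rightarrow> 'o) \<Rightarrow> (nat \<Rightarrow> nat \<Rightarrow> (int \<Rightarrow> int) \<Rightarrow> 'm) \<Rightarrow> nat \<Rightarrow> 'm" where
  "piop C Mo Mm n = msgn C n
     (c_cmp C (face Mm (n + 1) 0)
        (c_cmp C (mpow C (Mo (n + 1)) (kappa C Mm (n + 1)) n) (degen Mm n (n + 1))))"

end

theory Submission
  imports Defs
begin

lemma lam_inf_per_nat:
  assumes "lam_inf m n f"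
  shows "f (j + int k * (int m + 1)) = f j + int k * (int n + 1)"
proof (induction k arbitrary: j)
  case 0 then show ?case by simp
next
  case (Suc k)
  have "f (j + int (Suc k) * (int m + 1)) = f ((j + int k * (int m + 1)) + int m + 1)"
    by (simp add: algebra_simps)
  also have "\<dots> = f (j + int k * (int m + 1)) + int n + 1"
    using assms unfolding lam_inf_def by blast
  also have "\<dots> = f j + int (Suc k) * (int n + 1)" using Suc by (simp add: algebra_simps)
  finally show ?case .
qed

lemma lam_inf_per:
  assumes "lam_inf m n f"
  shows "f (j + q * (int m + 1)) = f j + q * (int n + 1)"
proof (cases "q \<ge> 0")
  case True
  then show ?thesis using lam_inf_per_nat[OF assms, of j "nat q"] by simp
next
  case False
  define k where "k = nat (- q)"
  have k: "q = - int k" using False unfolding k_def by simp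
  have "f ((j + q * (int m + 1)) + int k * (int m + 1)) = f (j + q * (int m + 1)) + int k * (int n + 1)"
    using lam_inf_per_nat[OF assms] by blast
  then show ?thesis using k by (simp add: algebra_simps)
qed

lemma lam_inf_eqI:
  assumes "lam_inf m n f" "lam_inf m n g" "\<And>j. 0 \<le> j \<Longrightarrow> j \<le> int m \<Longrightarrow> f j = g j"
  shows "f = g"
proof
  fix j :: int
  define q where "q = j div (int m + 1)"
  define r where "r = j mod (int m + 1)"
  have j: "j = r + q * (int m + 1)" unfolding q_def r_def using div_mult_mod_eq[of j "int m + 1"] by linarith
  have r: "0 \<le> r" "r \<le> int m" unfolding r_def using pos_mod_bound[of "int m + 1"] by auto
  show "f j = g j" using j r lam_inf_per[OF assms(1)] lam_inf_per[OF assms(2)] assms(3)[OF r] by metis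
qed

lemma lext_decomp:
  assumes "0 \<le> x" "x \<le> int m"
  shows "lext m n g (x + q * (int m + 1)) = g x + q * (int n + 1)"
proof -
  have "(x + q * (int m + 1)) mod (int m + 1) = x" using assms by simp
  moreover have "(x + q * (int m + 1)) div (int m + 1) = q" using assms by simp
  ultimately show ?thesis unfolding lext_def by (simp add: add.commute)
qed

lemma lext0: "0 \<le> x \<Longrightarrow> x \<le> int m \<Longrightarrow> lext m n g x = g x"
  using lext_decomp[of x m n g 0] by simp

lemma lext1: "int m + 1 \<le> x \<Longrightarrow> x \<le> 2 * int m + 1 \<Longrightarrow> lext m n g x = g (x - int m - 1) + int n + 1"
  using lext_decomp[of "x - int m - 1" m n g 1] by simp

lemma lext_per: "lext m n g (x + int m + 1) = lext m n g x + int n + 1"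
proof -
  define q where "q = x div (int m + 1)"
  define r where "r = x mod (int m + 1)"
  have j: "x = r + q * (int m + 1)" unfolding q_def r_def using div_mult_mod_eq[of x "int m + 1"] by linarith
  have r: "0 \<le> r" "r \<le> int m" unfolding r_def using pos_mod_bound[of "int m + 1"] by auto
  have "x + int m + 1 = r + (q+1) * (int m + 1)" using j by (simp add: algebra_simps)
  then have "lext m n g (x + int m + 1) = g r + (q+1) * (int n + 1)" using lext_decomp[OF r] by simp
  moreover have "lext m n g x = g r + q * (int n + 1)" using j lext_decomp[OF r] by simp
  ultimately show ?thesis by (simp add: algebra_simps)
qed

lemma mono_int_step: fixes f :: "int \<Rightarrow> int" assumes "\<And>x. f x \<le> f (x + 1)" shows "mono f"
proof (rule monoI)
  fix x y :: int assume "x \<le> y"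
  define k where "k = nat (y - x)"
  have k: "y = x + int k" using \<open>x \<le> y\<close> unfolding k_def by simp
  have "f x \<le> f (x + int k)" for k
  proof (induction k)
    case (Suc k)
    have "f (x + int k) \<le> f (x + int k + 1)" by (rule assms)
    moreover have "x + int (Suc k) = x + int k + 1" by simp
    ultimately show ?case using Suc by (metis order_trans)
  qed simp
  then show "f x \<le> f y" using k by simp
qed

lemma lam_inf_lext:
  assumes mon: "\<And>i j. 0 \<le> i \<Longrightarrow> i \<le> j \<Longrightarrow> j \<le> int m \<Longrightarrow> g i \<le> g j"
    and top: "g (int m) \<le> g 0 + int n + 1"
  shows "lam_inf m n (lext m n g)"
  unfolding lam_inf_def
proof (intro conjI allI)
  show "lext m n g (j + int m + 1) = lext m n g j + int n + 1" for j by (rule lext_per)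
  show "mono (lext m n g)"
  proof (rule mono_int_step)
    fix x :: int
    define q where "q = x div (int m + 1)"
    define r where "r = x mod (int m + 1)"
    have j: "x = r + q * (int m + 1)" unfolding q_def r_def using div_mult_mod_eq[of x "int m + 1"] by linarith
    have r: "0 \<le> r" "r \<le> int m" unfolding r_def using pos_mod_bound[of "int m + 1"] by auto
    show "lext m n (g) x \<le> lext m n g (x + 1)"
    proof (cases "r < int m")
      case True
      have e: "x + 1 = (r + 1) + q * (int m + 1)" using j by simp
      have "lext m n g (x + 1) = g (r + 1) + q * (int n + 1)"
        unfolding e using lext_decomp[of "r+1" m n g q] True r by simp
      moreover have "lext m n g x = g r + q * (int n + 1)" using j lext_decomp[OF r] by simp
      ultimately show ?thesis using True r mon[of r "r+1"] by simp
    next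
      case False
      then have "r = int m" using r by simp
      then have "x + 1 = 0 + (q + 1) * (int m + 1)" using j by (simp add: algebra_simps)
      then have "lext m n g (x + 1) = g 0 + (q + 1) * (int n + 1)"
        using lext_decomp[of 0 m n g "q+1"] by simp
      moreover have "lext m n g x = g r + q * (int n + 1)" using j lext_decomp[OF r] by simp
      ultimately show ?thesis using \<open>r = int m\<close> top by (simp add: algebra_simps)
    qed
  qed
qed

lemma lam_inf_comp: "lam_inf l m f \<Longrightarrow> lam_inf m n g \<Longrightarrow> lam_inf l n (g \<circ> f)"
  unfolding lam_inf_def by (simp add: mono_def)

lemma lam_plus_comp:
  assumes "lam_plus l m f" "lam_plus m n g" shows "lam_plus l n (g \<circ> f)"
proof -
  have "g 0 \<le> g (f 0)" using assms unfolding lam_plus_def lam_inf_def mono_def by blast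
  then show ?thesis using assms lam_inf_comp unfolding lam_plus_def by auto
qed

lemma eps_lp: "1 \<le> n \<Longrightarrow> lam_plus (n - 1) n (eps n i)"
  unfolding lam_plus_def eps_def
proof (intro conjI)
  assume n: "1 \<le> n"
  show "lam_inf (n - 1) n (lext (n - 1) n (\<lambda>j. if j < int i then j else j + 1))"
  proof (rule lam_inf_lext)
    show "(if int (n - 1) < int i then int (n - 1) else int (n - 1) + 1)
      \<le> (if 0 < int i then 0 else 0 + 1) + int n + 1" using n by simp
  qed simp
  show "0 \<le> lext (n - 1) n (\<lambda>j. if j < int i then j else j + 1) 0"
    by (subst lext0) auto
qed

lemma eta_lp: "lam_plus (Suc n) n (eta n i)"
  unfolding lam_plus_def eta_def
proof (intro conjI)
  show "lam_inf (Suc n) n (lext (n + 1) n (\<lambda>j. if j \<le> int i then j else j - 1))"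
    by (simp, rule lam_inf_lext) simp_all
  show "0 \<le> lext (n + 1) n (\<lambda>j. if j \<le> int i then j else j - 1) 0"
    by (subst lext0) auto
qed

lemma shift_lp: "lam_plus n n (\<lambda>x. x + int k)"
  unfolding lam_plus_def lam_inf_def by (auto simp: mono_def)

lemma tau_lp: "lam_plus n n (tau n)"
  unfolding lam_plus_def lam_inf_def tau_def by (auto simp: mono_def)

lemma id_lp: "lam_plus n n id"
  unfolding lam_plus_def lam_inf_def by (auto simp: mono_def)

lemma test: True by simp

lemma eps_ev0: "1 \<le> n \<Longrightarrow> 0 \<le> x \<Longrightarrow> x \<le> int n - 1 \<Longrightarrow> eps n i x = (if x < int i then x else x + 1)"
  unfolding eps_def by (subst lext0) auto

lemma eps_ev1: "1 \<le> n \<Longrightarrow> int n \<le> x \<Longrightarrow> x \<le> 2 * int n - 1 \<Longrightarrow>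
   eps n i x = (if x - int n < int i then x - int n else x - int n + 1) + int n + 1"
  unfolding eps_def by (subst lext1) auto

lemma eta_ev0: "0 \<le> x \<Longrightarrow> x \<le> int n + 1 \<Longrightarrow> eta n i x = (if x \<le> int i then x else x - 1)"
  unfolding eta_def by (subst lext0) auto

lemma eta_ev1: "int n + 2 \<le> x \<Longrightarrow> x \<le> 2 * int n + 3 \<Longrightarrow>
   eta n i x = (if x - int n - 2 \<le> int i then x - int n - 2 else x - int n - 3) + int n + 1"
  unfolding eta_def by (subst lext1) auto

lemma eps_at: "1 \<le> n \<Longrightarrow> eps n i (int n) = (if 0 < i then int n + 1 else int n + 2)"
  by (subst eps_ev1) auto

lemma eta_at: "eta n i (int n + 2) = int n + 1"
  by (subst eta_ev1) auto

lemma lp_inf: "lam_plus m n f \<Longrightarrow> lam_inf m n f" unfolding lam_plus_def by simp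

lemma epsS_lp: "lam_plus n (Suc n) (eps (Suc n) i)" using eps_lp[of "Suc n" i] by simp

lemma F1: "eta n (Suc n) \<circ> eps (Suc n) 0 = tau n"
proof (rule lam_inf_eqI)
  show "lam_inf n n (eta n (Suc n) \<circ> eps (Suc n) 0)"
    by (rule lp_inf, rule lam_plus_comp[OF epsS_lp eta_lp])
  show "lam_inf n n (tau n)" by (rule lp_inf, rule tau_lp)
  fix x assume "0 \<le> x" "x \<le> int n"
  then show "(eta n (Suc n) \<circ> eps (Suc n) 0) x = tau n x"
    by (simp add: eps_ev0 eta_ev0 tau_def)
qed

lemma F2:
  assumes "1 \<le> n" "i < j" "j \<le> Suc n"
  shows "eps (Suc n) j \<circ> eps n i = eps (Suc n) i \<circ> eps n (j - 1)"
proof (rule lam_inf_eqI)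
  show "lam_inf (n - 1) (Suc n) (eps (Suc n) j \<circ> eps n i)"
    by (rule lp_inf, rule lam_plus_comp[OF eps_lp epsS_lp]) (use assms in simp)
  show "lam_inf (n - 1) (Suc n) (eps (Suc n) i \<circ> eps n (j - 1))"
    by (rule lp_inf, rule lam_plus_comp[OF eps_lp epsS_lp]) (use assms in simp)
  fix x assume "0 \<le> x" "x \<le> int (n - 1)"
  then show "(eps (Suc n) j \<circ> eps n i) x = (eps (Suc n) i \<circ> eps n (j - 1)) x"
    using assms by (auto simp: eps_ev0)
qed

lemma F3a:
  assumes "1 \<le> n" "i < j" "j \<le> Suc n" "\<not> (i = 0 \<and> j = Suc n)"
  shows "eta n j \<circ> eps (Suc n) i = eps n i \<circ> eta (n - 1) (j - 1)"
proof (rule lam_inf_eqI)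
  show "lam_inf n n (eta n j \<circ> eps (Suc n) i)"
    by (rule lp_inf, rule lam_plus_comp[OF epsS_lp eta_lp])
  have "lam_plus (Suc (n-1)) (n - 1 + 1) (eps (n - 1 + 1) i \<circ> eta (n - 1) (j - 1))"
    by (rule lam_plus_comp[OF eta_lp]) (use eps_lp[of "n-1+1" i] assms in simp)
  then show "lam_inf n n (eps n i \<circ> eta (n - 1) (j - 1))" using assms by (simp add: lp_inf)
  fix x assume "0 \<le> x" "x \<le> int n"
  then show "(eta n j \<circ> eps (Suc n) i) x = (eps n i \<circ> eta (n - 1) (j - 1)) x"
    using assms by (cases "x = int n") (auto simp: eps_ev0 eps_at eta_ev0)
qed

lemma F3b:
  assumes "j \<le> Suc n" "i = j \<or> i = Suc j" "i \<le> Suc n"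
  shows "eta n j \<circ> eps (Suc n) i = id"
proof (rule lam_inf_eqI)
  show "lam_inf n n (eta n j \<circ> eps (Suc n) i)"
    by (rule lp_inf, rule lam_plus_comp[OF epsS_lp eta_lp])
  show "lam_inf n n id" by (rule lp_inf, rule id_lp)
  fix x assume "0 \<le> x" "x \<le> int n"
  then show "(eta n j \<circ> eps (Suc n) i) x = id x"
    using assms by (auto simp: eps_ev0 eta_ev0)
qed

lemma F3c:
  assumes "Suc j < i" "i \<le> Suc n"
  shows "eta n j \<circ> eps (Suc n) i = eps n (i - 1) \<circ> eta (n - 1) j"
proof (rule lam_inf_eqI)
  have n: "1 \<le> n" using assms by simp
  show "lam_inf n n (eta n j \<circ> eps (Suc n) i)"
    by (rule lp_inf, rule lam_plus_comp[OF epsS_lp eta_lp])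
  have "lam_plus (Suc (n-1)) (n - 1 + 1) (eps (n - 1 + 1) (i-1) \<circ> eta (n - 1) j)"
    by (rule lam_plus_comp[OF eta_lp]) (use eps_lp[of "n-1+1" "i-1"] n in simp)
  then show "lam_inf n n (eps n (i-1) \<circ> eta (n - 1) j)" using n by (simp add: lp_inf)
  fix x assume "0 \<le> x" "x \<le> int n"
  then show "(eta n j \<circ> eps (Suc n) i) x = (eps n (i-1) \<circ> eta (n - 1) j) x"
    using assms n by (auto simp: eps_ev0 eps_ev1 eta_ev0)
qed

lemma F4:
  assumes "i \<le> j" "j \<le> Suc n"
  shows "eta n j \<circ> eta (Suc n) i = eta n i \<circ> eta (Suc n) (Suc j)"
proof (rule lam_inf_eqI)
  show "lam_inf (Suc (Suc n)) n (eta n j \<circ> eta (Suc n) i)"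
    by (rule lp_inf, rule lam_plus_comp[OF eta_lp eta_lp])
  show "lam_inf (Suc (Suc n)) n (eta n i \<circ> eta (Suc n) (Suc j))"
    by (rule lp_inf, rule lam_plus_comp[OF eta_lp eta_lp])
  fix x assume "0 \<le> x" "x \<le> int (Suc (Suc n))"
  then show "(eta n j \<circ> eta (Suc n) i) x = (eta n i \<circ> eta (Suc n) (Suc j)) x"
    using assms by (cases "x = int n + 2") (auto simp: eta_ev0 eta_at)
qed

lemma F6: "lam_inf m n f \<Longrightarrow> (\<lambda>x. x + (int n + 1)) \<circ> f = f \<circ> (\<lambda>x. x + (int m + 1))"
  unfolding lam_inf_def by (auto simp: add.assoc)

lemma shift_comp: "(\<lambda>x. x + int k) \<circ> tau n = (\<lambda>x. x + int (Suc k))"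
  unfolding tau_def by auto


locale PA =
  fixes C :: "('o, 'm) cat_data"
  assumes pre: "preadditive C"
begin

abbreviation "ar f \<equiv> f \<in> c_ar C"
abbreviation "dm \<equiv> c_dom C"
abbreviation "cd \<equiv> c_cod C"
abbreviation "ob \<equiv> c_ob C"
abbreviation "cmp \<equiv> c_cmp C"
abbreviation "pls \<equiv> c_pls C"
abbreviation "ngt \<equiv> c_ngt C"
abbreviation "idt \<equiv> c_idt C"
abbreviation "zer \<equiv> c_zer C"

lemma hom_iff: "f \<in> hom C a b \<longleftrightarrow> ar f \<and> dm f = a \<and> cd f = b"
  unfolding hom_def by auto

lemmas P0 = pre[unfolded preadditive_def]
lemmas ax1 = P0[THEN conjunct1]
lemmas ax2 = P0[THEN conjunct2, THEN conjunct1]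
lemmas ax3 = P0[THEN conjunct2, THEN conjunct2, THEN conjunct1]
lemmas ax4 = P0[THEN conjunct2, THEN conjunct2, THEN conjunct2, THEN conjunct1]
lemmas ax5 = P0[THEN conjunct2, THEN conjunct2, THEN conjunct2, THEN conjunct2, THEN conjunct1]
lemmas ax6 = P0[THEN conjunct2, THEN conjunct2, THEN conjunct2, THEN conjunct2, THEN conjunct2, THEN conjunct1]
lemmas ax7 = P0[THEN conjunct2, THEN conjunct2, THEN conjunct2, THEN conjunct2, THEN conjunct2, THEN conjunct2]

lemma dom_ob[simp]: "ar f \<Longrightarrow> dm f \<in> ob" using ax1 by blast
lemma cod_ob[simp]: "ar f \<Longrightarrow> cd f \<in> ob" using ax1 by blast

lemma idt_hom: "a \<in> ob \<Longrightarrow> idt a \<in> hom C a a" using ax2 by blast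
lemma idt_ty[simp]: "a \<in> ob \<Longrightarrow> ar (idt a)" "a \<in> ob \<Longrightarrow> dm (idt a) = a" "a \<in> ob \<Longrightarrow> cd (idt a) = a"
  using idt_hom by (auto simp: hom_iff)

lemma cmp_hom: "f \<in> hom C a b \<Longrightarrow> g \<in> hom C b c \<Longrightarrow> cmp g f \<in> hom C a c"
proof -
  assume f: "f \<in> hom C a b" and g: "g \<in> hom C b c"
  have "a \<in> ob" "b \<in> ob" "c \<in> ob" using f g by (auto simp: hom_iff)
  then show ?thesis using ax3 f g by blast
qed

lemma cmp_ty[simp]:
  "ar f \<Longrightarrow> ar g \<Longrightarrow> cd f = dm g \<Longrightarrow> ar (cmp g f)"
  "ar f \<Longrightarrow> ar g \<Longrightarrow> cd f = dm g \<Longrightarrow> dm (cmp g f) = dm f"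
  "ar f \<Longrightarrow> ar g \<Longrightarrow> cd f = dm g \<Longrightarrow> cd (cmp g f) = cd g"
  using cmp_hom[of f "dm f" "cd f" g "cd g"] by (auto simp: hom_iff)

lemma grp: "a \<in> ob \<Longrightarrow> b \<in> ob \<Longrightarrow>
         zer a b \<in> hom C a b
       \<and> (\<forall>f \<in> hom C a b. \<forall>g \<in> hom C a b. pls f g \<in> hom C a b)
       \<and> (\<forall>f \<in> hom C a b. ngt f \<in> hom C a b)
       \<and> (\<forall>f \<in> hom C a b. \<forall>g \<in> hom C a b. \<forall>h \<in> hom C a b.
             pls (pls f g) h = pls f (pls g h))
       \<and> (\<forall>f \<in> hom C a b. \<forall>g \<in> hom C a b. pls f g = pls g f)
       \<and> (\<forall>f \<in> hom C a b. pls f (zer a b) = f)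
       \<and> (\<forall>f \<in> hom C a b. pls f (ngt f) = zer a b)"
  using pre unfolding preadditive_def by blast

lemma zer_ty[simp]: "a \<in> ob \<Longrightarrow> b \<in> ob \<Longrightarrow> ar (zer a b)"
    "a \<in> ob \<Longrightarrow> b \<in> ob \<Longrightarrow> dm (zer a b) = a"
    "a \<in> ob \<Longrightarrow> b \<in> ob \<Longrightarrow> cd (zer a b) = b"
  using grp by (auto simp: hom_iff)

lemma pls_ty[simp]:
  "ar f \<Longrightarrow> ar g \<Longrightarrow> dm f = dm g \<Longrightarrow> cd f = cd g \<Longrightarrow> ar (pls f g)"
  "ar f \<Longrightarrow> ar g \<Longrightarrow> dm f = dm g \<Longrightarrow> cd f = cd g \<Longrightarrow> dm (pls f g) = dm f"
  "ar f \<Longrightarrow> ar g \<Longrightarrow> dm f = dm g \<Longrightarrow> cd f = cd g \<Longrightarrow> cd (pls f g) = cd f"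
  using grp[of "dm f" "cd f"] by (auto simp: hom_iff)

lemma ngt_ty[simp]:
  "ar f \<Longrightarrow> ar (ngt f)" "ar f \<Longrightarrow> dm (ngt f) = dm f" "ar f \<Longrightarrow> cd (ngt f) = cd f"
  using grp[of "dm f" "cd f"] by (auto simp: hom_iff)

lemma pls_assoc:
  "ar f \<Longrightarrow> ar g \<Longrightarrow> ar h \<Longrightarrow> dm f = dm g \<Longrightarrow> cd f = cd g \<Longrightarrow> dm h = dm f \<Longrightarrow> cd h = cd f
   \<Longrightarrow> pls (pls f g) h = pls f (pls g h)"
  using grp[of "dm f" "cd f"] by (auto simp: hom_iff)

lemma pls_comm:
  "ar f \<Longrightarrow> ar g \<Longrightarrow> dm f = dm g \<Longrightarrow> cd f = cd g \<Longrightarrow> pls f g = pls g f"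
  using grp[of "dm f" "cd f"] by (auto simp: hom_iff)

lemma pls_zer: "ar f \<Longrightarrow> a = dm f \<Longrightarrow> b = cd f \<Longrightarrow> pls f (zer a b) = f"
  using grp[of "dm f" "cd f"] by (auto simp: hom_iff)

lemma pls_ngt: "ar f \<Longrightarrow> pls f (ngt f) = zer (dm f) (cd f)"
  using grp[of "dm f" "cd f"] by (auto simp: hom_iff)

lemma bilin: "f \<in> hom C a b \<Longrightarrow> f' \<in> hom C a b \<Longrightarrow> g \<in> hom C b c \<Longrightarrow> g' \<in> hom C b c \<Longrightarrow>
           cmp g (pls f f') = pls (cmp g f) (cmp g f')
         \<and> cmp (pls g g') f = pls (cmp g f) (cmp g' f)"
proof -
  assume a: "f \<in> hom C a b" "f' \<in> hom C a b" "g \<in> hom C b c" "g' \<in> hom C b c"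
  then have "a \<in> ob" "b \<in> ob" "c \<in> ob" by (auto simp: hom_iff)
  with a show ?thesis using ax7 by blast
qed

lemma dist_l: "ar f \<Longrightarrow> ar f' \<Longrightarrow> ar g \<Longrightarrow> dm f = dm f' \<Longrightarrow> cd f = cd f' \<Longrightarrow> cd f = dm g \<Longrightarrow>
   cmp g (pls f f') = pls (cmp g f) (cmp g f')"
  using bilin[of f "dm f" "cd f" f' g "cd g" g] by (auto simp: hom_iff)

lemma dist_r: "ar f \<Longrightarrow> ar g \<Longrightarrow> ar g' \<Longrightarrow> dm g = dm g' \<Longrightarrow> cd g = cd g' \<Longrightarrow> cd f = dm g \<Longrightarrow>
   cmp (pls g g') f = pls (cmp g f) (cmp g' f)"
  using bilin[of f "dm f" "cd f" f g "cd g" g'] by (auto simp: hom_iff)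

lemma assoc: "ar f \<Longrightarrow> ar g \<Longrightarrow> ar h \<Longrightarrow> cd f = dm g \<Longrightarrow> cd g = dm h \<Longrightarrow>
   cmp (cmp h g) f = cmp h (cmp g f)"
proof -
  assume a: "ar f" "ar g" "ar h" "cd f = dm g" "cd g = dm h"
  have "dm f \<in> ob" "dm g \<in> ob" "dm h \<in> ob" "cd h \<in> ob" using a by auto
  have "f \<in> hom C (dm f) (dm g)" "g \<in> hom C (dm g) (dm h)" "h \<in> hom C (dm h) (cd h)"
    using a by (auto simp: hom_iff)
  then show ?thesis using ax4 a by (metis dom_ob cod_ob)
qed

lemma id_l: "ar f \<Longrightarrow> b = cd f \<Longrightarrow> cmp (idt b) f = f"
proof -
  assume a: "ar f" "b = cd f"
  then have "f \<in> hom C (dm f) (cd f)" by (simp add: hom_iff)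
  then show ?thesis using ax5 a by (metis dom_ob cod_ob)
qed
lemma id_r: "ar f \<Longrightarrow> a = dm f \<Longrightarrow> cmp f (idt a) = f"
proof -
  assume a: "ar f" "a = dm f"
  then have "f \<in> hom C (dm f) (cd f)" by (simp add: hom_iff)
  then show ?thesis using ax5 a by (metis dom_ob cod_ob)
qed

lemma zer_pls: "ar f \<Longrightarrow> a = dm f \<Longrightarrow> b = cd f \<Longrightarrow> pls (zer a b) f = f"
  by (simp add: pls_comm pls_zer)

lemma pls_cancel_l:
  assumes "ar f" "ar g" "ar h" "dm f = dm g" "cd f = cd g" "dm h = dm f" "cd h = cd f"
    "pls h f = pls h g" shows "f = g"
proof -
  have "f = pls (pls (ngt h) h) f" using assms by (simp add: pls_comm[of "ngt h" h] pls_ngt zer_pls)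
  also have "\<dots> = pls (ngt h) (pls h f)" using assms by (simp add: pls_assoc)
  also have "\<dots> = pls (ngt h) (pls h g)" using assms by simp
  also have "\<dots> = pls (pls (ngt h) h) g" using assms by (simp add: pls_assoc)
  also have "\<dots> = g" using assms by (simp add: pls_comm[of "ngt h" h] pls_ngt zer_pls)
  finally show ?thesis .
qed

lemma ngt_unique: "ar f \<Longrightarrow> ar g \<Longrightarrow> dm f = dm g \<Longrightarrow> cd f = cd g \<Longrightarrow>
   pls f g = zer (dm f) (cd f) \<Longrightarrow> g = ngt f"
  by (rule pls_cancel_l[of g "ngt f" f]) (simp_all add: pls_ngt)

lemma ngt_ngt[simp]: "ar f \<Longrightarrow> ngt (ngt f) = f"
  by (metis ngt_ty ngt_unique pls_comm pls_ngt)

lemma ngt_pls: "ar f \<Longrightarrow> ar g \<Longrightarrow> dm f = dm g \<Longrightarrow> cd f = cd g \<Longrightarrow> ngt (pls f g) = pls (ngt f) (ngt g)"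
proof -
  assume a: "ar f" "ar g" "dm f = dm g" "cd f = cd g"
  have "pls (pls f g) (pls (ngt f) (ngt g)) = pls (pls f (ngt f)) (pls g (ngt g))"
    using a by (simp add: pls_assoc pls_comm[of "ngt f" "pls g (ngt g)"] pls_comm[of "ngt f" "ngt g"])
  also have "\<dots> = zer (dm f) (cd f)" using a by (simp add: pls_ngt pls_zer)
  finally show ?thesis using a by (intro ngt_unique[symmetric]) auto
qed

lemma zer_r: "ar g \<Longrightarrow> a \<in> ob \<Longrightarrow> b = dm g \<Longrightarrow> cmp g (zer a b) = zer a (cd g)"
proof -
  assume a: "ar g" "a \<in> ob" "b = dm g"
  have "pls (cmp g (zer a b)) (cmp g (zer a b)) = cmp g (pls (zer a b) (zer a b))"
    using a by (simp add: dist_l)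
  also have "\<dots> = cmp g (zer a b)" using a by (simp add: pls_zer)
  finally have e: "pls (cmp g (zer a b)) (cmp g (zer a b)) = pls (cmp g (zer a b)) (zer a (cd g))"
    using a by (simp add: pls_zer)
  show ?thesis by (rule pls_cancel_l[OF _ _ _ _ _ _ _ e]) (use a in auto)
qed

lemma zer_l: "ar f \<Longrightarrow> c \<in> ob \<Longrightarrow> b = cd f \<Longrightarrow> cmp (zer b c) f = zer (dm f) c"
proof -
  assume a: "ar f" "c \<in> ob" "b = cd f"
  have "pls (cmp (zer b c) f) (cmp (zer b c) f) = cmp (pls (zer b c) (zer b c)) f"
    using a by (simp add: dist_r)
  also have "\<dots> = cmp (zer b c) f" using a by (simp add: pls_zer)
  finally have e: "pls (cmp (zer b c) f) (cmp (zer b c) f) = pls (cmp (zer b c) f) (zer (dm f) c)"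
    using a by (simp add: pls_zer)
  show ?thesis by (rule pls_cancel_l[OF _ _ _ _ _ _ _ e]) (use a in auto)
qed

lemma ngt_r: "ar f \<Longrightarrow> ar g \<Longrightarrow> cd f = dm g \<Longrightarrow> cmp g (ngt f) = ngt (cmp g f)"
proof -
  assume a: "ar f" "ar g" "cd f = dm g"
  have "pls (cmp g f) (cmp g (ngt f)) = cmp g (pls f (ngt f))" using a by (simp add: dist_l)
  also have "\<dots> = zer (dm f) (cd g)" using a by (simp add: pls_ngt zer_r)
  finally show ?thesis using a by (intro ngt_unique) auto
qed

lemma ngt_l: "ar f \<Longrightarrow> ar g \<Longrightarrow> cd f = dm g \<Longrightarrow> cmp (ngt g) f = ngt (cmp g f)"
proof -
  assume a: "ar f" "ar g" "cd f = dm g"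
  have "pls (cmp g f) (cmp (ngt g) f) = cmp (pls g (ngt g)) f" using a by (simp add: dist_r)
  also have "\<dots> = zer (dm f) (cd g)" using a by (simp add: pls_ngt zer_l)
  finally show ?thesis using a by (intro ngt_unique) auto
qed

lemma ngt_zer: "a \<in> ob \<Longrightarrow> b \<in> ob \<Longrightarrow> ngt (zer a b) = zer a b"
  by (metis ngt_ngt ngt_ty(1) ngt_ty(2) ngt_ty(3) pls_ngt zer_pls zer_ty)


lemma msub_ty[simp]:
  "ar f \<Longrightarrow> ar g \<Longrightarrow> dm f = dm g \<Longrightarrow> cd f = cd g \<Longrightarrow> ar (msub C f g)"
  "ar f \<Longrightarrow> ar g \<Longrightarrow> dm f = dm g \<Longrightarrow> cd f = cd g \<Longrightarrow> dm (msub C f g) = dm f"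
  "ar f \<Longrightarrow> ar g \<Longrightarrow> dm f = dm g \<Longrightarrow> cd f = cd g \<Longrightarrow> cd (msub C f g) = cd f"
  unfolding msub_def by auto

lemma msgn_ty[simp]:
  "ar f \<Longrightarrow> ar (msgn C n f)" "ar f \<Longrightarrow> dm (msgn C n f) = dm f" "ar f \<Longrightarrow> cd (msgn C n f) = cd f"
  unfolding msgn_def by auto

lemma mpow_ty[simp]:
  "ar h \<Longrightarrow> dm h = a \<Longrightarrow> cd h = a \<Longrightarrow> ar (mpow C a h k)"
  "ar h \<Longrightarrow> dm h = a \<Longrightarrow> cd h = a \<Longrightarrow> dm (mpow C a h k) = a"
  "ar h \<Longrightarrow> dm h = a \<Longrightarrow> cd h = a \<Longrightarrow> cd (mpow C a h k) = a"
  by (induction k) auto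

lemma sub_l: "ar f \<Longrightarrow> ar f' \<Longrightarrow> ar g \<Longrightarrow> dm f = dm f' \<Longrightarrow> cd f = cd f' \<Longrightarrow> cd f = dm g \<Longrightarrow>
   cmp g (msub C f f') = msub C (cmp g f) (cmp g f')"
  unfolding msub_def by (simp add: dist_l ngt_r)

lemma sub_r: "ar f \<Longrightarrow> ar g \<Longrightarrow> ar g' \<Longrightarrow> dm g = dm g' \<Longrightarrow> cd g = cd g' \<Longrightarrow> cd f = dm g \<Longrightarrow>
   cmp (msub C g g') f = msub C (cmp g f) (cmp g' f)"
  unfolding msub_def by (simp add: dist_r ngt_l)

lemma msgn_l: "ar f \<Longrightarrow> ar g \<Longrightarrow> cd f = dm g \<Longrightarrow> cmp (msgn C n g) f = msgn C n (cmp g f)"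
  unfolding msgn_def by (simp add: ngt_l)
lemma msgn_r: "ar f \<Longrightarrow> ar g \<Longrightarrow> cd f = dm g \<Longrightarrow> cmp g (msgn C n f) = msgn C n (cmp g f)"
  unfolding msgn_def by (simp add: ngt_r)

lemma msgn_0[simp]: "msgn C 0 f = f" unfolding msgn_def by simp
lemma msgn_Suc: "ar f \<Longrightarrow> msgn C (Suc n) f = ngt (msgn C n f)" unfolding msgn_def by simp
lemma msgn_add: "ar f \<Longrightarrow> msgn C (m + n) f = msgn C m (msgn C n f)" unfolding msgn_def by auto
lemma msgn_even: "even n \<Longrightarrow> msgn C n f = f" unfolding msgn_def by simp
lemma msgn_msgn_same[simp]: "ar f \<Longrightarrow> msgn C n (msgn C n f) = f" unfolding msgn_def by auto

lemma sub_self: "ar f \<Longrightarrow> msub C f f = zer (dm f) (cd f)" unfolding msub_def by (simp add: pls_ngt)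

lemma sub_zer: "ar f \<Longrightarrow> a = dm f \<Longrightarrow> b = cd f \<Longrightarrow> msub C f (zer a b) = f"
  unfolding msub_def by (simp add: ngt_zer pls_zer)
lemma zer_sub: "ar f \<Longrightarrow> a = dm f \<Longrightarrow> b = cd f \<Longrightarrow> msub C (zer a b) f = ngt f"
  unfolding msub_def by (simp add: zer_pls)

lemma mpow_comm: "ar h \<Longrightarrow> dm h = a \<Longrightarrow> cd h = a \<Longrightarrow> cmp (mpow C a h k) h = cmp h (mpow C a h k)"
  by (induction k) (auto simp: id_l id_r assoc)

lemma mpow_msgn: "ar h \<Longrightarrow> dm h = a \<Longrightarrow> cd h = a \<Longrightarrow> mpow C a (msgn C j h) k = msgn C (j * k) (mpow C a h k)"
proof (induction k)
  case 0 then show ?case by simp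
next
  case (Suc k)
  have "mpow C a (msgn C j h) (Suc k) = cmp (msgn C j h) (msgn C (j * k) (mpow C a h k))"
    using Suc by simp
  also have "\<dots> = msgn C j (msgn C (j * k) (cmp h (mpow C a h k)))" using Suc by (simp add: msgn_l msgn_r) (auto simp: msgn_def)
  also have "\<dots> = msgn C (j * Suc k) (mpow C a h (Suc k))" using Suc unfolding msgn_def by auto
  finally show ?case .
qed

lemma invertibleI2:
  assumes "h \<in> hom C a a" "l \<in> hom C a a" "q \<in> hom C a a" "cmp l h = idt a" "cmp h q = idt a"
  shows "invertible C a h"
proof -
  have "l = cmp l (cmp h q)" using assms by (simp add: id_r hom_iff)
  also have "\<dots> = cmp (cmp l h) q" by (rule assoc[symmetric]) (use assms in \<open>auto simp: hom_iff\<close>)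
  also have "\<dots> = q" using assms by (simp add: id_l hom_iff)
  finally show ?thesis using assms unfolding invertible_def by auto
qed

lemma invertible_msgn: "ar h \<Longrightarrow> invertible C a (msgn C n h) \<longleftrightarrow> invertible C a h"
proof -
  have *: "invertible C a (msgn C n h)" if inv: "invertible C a h" "ar h" for h
  proof -
    obtain g where g: "g \<in> hom C a a" "cmp g h = idt a" "cmp h g = idt a" "h \<in> hom C a a"
      using inv unfolding invertible_def by blast
    show ?thesis unfolding invertible_def
      by (rule conjI, simp add: hom_iff g(4)[unfolded hom_iff], rule bexI[of _ "msgn C n g"])
        (use g in \<open>auto simp: msgn_l msgn_r hom_iff\<close>)
  qed
  assume "ar h"
  then show ?thesis using *[of h] *[of "msgn C n h"] by auto
qed

lemma invertible_cmp:
  assumes "invertible C a x" "invertible C a y" shows "invertible C a (cmp x y)"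
proof -
  obtain g where g: "g \<in> hom C a a" "cmp g x = idt a" "cmp x g = idt a" "x \<in> hom C a a"
    using assms unfolding invertible_def by blast
  obtain g' where g': "g' \<in> hom C a a" "cmp g' y = idt a" "cmp y g' = idt a" "y \<in> hom C a a"
    using assms unfolding invertible_def by blast
  show ?thesis
  proof (rule invertibleI2[of _ _ "cmp g' g" "cmp g' g"])
    show "cmp (cmp g' g) (cmp x y) = idt a" using g g'
      by (simp add: hom_iff assoc) (simp add: assoc[symmetric] id_l)
    show "cmp (cmp x y) (cmp g' g) = idt a" using g g'
      by (simp add: hom_iff assoc) (simp add: assoc[symmetric] id_l)
  qed (use g g' in \<open>auto simp: hom_iff\<close>)
qed

lemma invertible_id: "a \<in> ob \<Longrightarrow> invertible C a (idt a)"
  unfolding invertible_def by (auto simp: hom_iff id_l intro!: bexI[of _ "idt a"])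

lemma invertible_mpow: "invertible C a h \<Longrightarrow> invertible C a (mpow C a h k)"
proof (induction k)
  case 0
  then have "a \<in> ob" unfolding invertible_def hom_iff by auto
  then show ?case by (simp add: invertible_id)
next
  case (Suc k) then show ?case by (simp add: invertible_cmp)
qed

lemma invertible_factor:
  assumes "x \<in> hom C a a" "y \<in> hom C a a" "cmp x y = z" "cmp y x = z" "invertible C a z"
  shows "invertible C a x"
proof -
  obtain g where g: "g \<in> hom C a a" "cmp g z = idt a" "cmp z g = idt a" "z \<in> hom C a a"
    using assms unfolding invertible_def by blast
  show ?thesis
  proof (rule invertibleI2[of _ _ "cmp g y" "cmp y g"])
    show "cmp (cmp g y) x = idt a" using assms g by (simp add: hom_iff assoc)
    show "cmp x (cmp y g) = idt a" using assms g by (simp add: hom_iff assoc[symmetric])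
  qed (use assms g in \<open>auto simp: hom_iff\<close>)
qed

end

locale DUP = PA C for C :: "('o, 'm) cat_data" +
  fixes Mo :: "nat \<Rightarrow> 'o" and Mm :: "nat \<Rightarrow> nat \<Rightarrow> (int \<Rightarrow> int) \<Rightarrow> 'm"
    and N :: "nat \<Rightarrow> 'o" and iota :: "nat \<Rightarrow> 'm" and r :: "nat \<Rightarrow> 'm"
  assumes dup: "duplicial C Mo Mm"
    and spl: "\<forall>n. N n \<in> c_ob C \<and> iota n \<in> hom C (N n) (Mo n) \<and> r n \<in> hom C (Mo n) (N n)
              \<and> c_cmp C (r n) (iota n) = c_idt C (N n)
              \<and> c_cmp C (iota n) (r n) = pmap C Mo Mm n"
begin

abbreviation "d n i \<equiv> face Mm (Suc n) i"
abbreviation "s n i \<equiv> degen Mm n i"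
abbreviation "t n \<equiv> tmap Mm n"
abbreviation "T n \<equiv> mpow C (Mo n) (t n) (Suc n)"
abbreviation "pf n i \<equiv> pfac C Mo Mm n i"
abbreviation "pp n k \<equiv> pprod C Mo Mm n k"
abbreviation "P n \<equiv> pmap C Mo Mm n"
abbreviation "one n \<equiv> idt (Mo n)"

lemma Mo_ob[simp]: "Mo n \<in> ob" using dup unfolding duplicial_def by blast

lemma Mm_hom: "lam_plus m n f \<Longrightarrow> Mm m n f \<in> hom C (Mo n) (Mo m)"
  using dup unfolding duplicial_def by blast

lemma Mm_ty: "lam_plus m n f \<Longrightarrow> ar (Mm m n f)" "lam_plus m n f \<Longrightarrow> dm (Mm m n f) = Mo n"
  "lam_plus m n f \<Longrightarrow> cd (Mm m n f) = Mo m"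
  using Mm_hom by (auto simp: hom_iff)

lemma Mm_id: "Mm n n id = one n" using dup unfolding duplicial_def by blast

lemma Mm_comp: "lam_plus l m f \<Longrightarrow> lam_plus m n g \<Longrightarrow> Mm l n (g \<circ> f) = cmp (Mm l m f) (Mm m n g)"
  using dup unfolding duplicial_def by blast

lemma d_ty[simp]: "ar (d n i)" "dm (d n i) = Mo (Suc n)" "cd (d n i) = Mo n"
  unfolding face_def using Mm_ty[OF epsS_lp] by auto

lemma s_ty[simp]: "ar (s n i)" "dm (s n i) = Mo n" "cd (s n i) = Mo (Suc n)"
  unfolding degen_def using Mm_ty[OF eta_lp] by auto

lemma t_ty[simp]: "ar (t n)" "dm (t n) = Mo n" "cd (t n) = Mo n"
  unfolding tmap_def using Mm_ty[OF tau_lp] by auto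

lemma iota_ty[simp]: "ar (iota n)" "dm (iota n) = N n" "cd (iota n) = Mo n"
  using spl by (auto simp: hom_iff)
lemma r_ty[simp]: "ar (r n)" "dm (r n) = Mo n" "cd (r n) = N n"
  using spl by (auto simp: hom_iff)
lemma N_ob[simp]: "N n \<in> ob" using spl by auto
lemma r_iota: "cmp (r n) (iota n) = idt (N n)" using spl by auto
lemma iota_r: "cmp (iota n) (r n) = P n" using spl by auto

lemma M1: "cmp (d n 0) (s n (Suc n)) = t n"
proof -
  have "t n = Mm n n (eta n (Suc n) \<circ> eps (Suc n) 0)" unfolding tmap_def F1 ..
  also have "\<dots> = cmp (d n 0) (s n (Suc n))"
    unfolding face_def degen_def using Mm_comp[OF epsS_lp eta_lp] by simp
  finally show ?thesis ..
qed

lemma M2: "i < j \<Longrightarrow> j \<le> Suc (Suc n) \<Longrightarrow> cmp (d n i) (d (Suc n) j) = cmp (d n (j-1)) (d (Suc n) i)"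
proof -
  assume a: "i < j" "j \<le> Suc (Suc n)"
  have "cmp (d n i) (d (Suc n) j) = Mm n (Suc (Suc n)) (eps (Suc (Suc n)) j \<circ> eps (Suc n) i)"
    unfolding face_def using Mm_comp[OF epsS_lp epsS_lp] by simp
  also have "\<dots> = Mm n (Suc (Suc n)) (eps (Suc (Suc n)) i \<circ> eps (Suc n) (j - 1))"
    using F2[of "Suc n" i j] a by simp
  also have "\<dots> = cmp (d n (j-1)) (d (Suc n) i)"
    unfolding face_def using Mm_comp[OF epsS_lp epsS_lp] by simp
  finally show ?thesis .
qed

lemma M3a: "i < j \<Longrightarrow> j \<le> Suc (Suc n) \<Longrightarrow> \<not> (i = 0 \<and> j = Suc (Suc n)) \<Longrightarrow>
  cmp (d (Suc n) i) (s (Suc n) j) = cmp (s n (j-1)) (d n i)"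
proof -
  assume a: "i < j" "j \<le> Suc (Suc n)" "\<not> (i = 0 \<and> j = Suc (Suc n))"
  have "cmp (d (Suc n) i) (s (Suc n) j) = Mm (Suc n) (Suc n) (eta (Suc n) j \<circ> eps (Suc (Suc n)) i)"
    unfolding face_def degen_def using Mm_comp[OF epsS_lp eta_lp] by simp
  also have "\<dots> = Mm (Suc n) (Suc n) (eps (Suc n) i \<circ> eta n (j - 1))"
    using F3a[of "Suc n" i j] a by simp
  also have "\<dots> = cmp (s n (j-1)) (d n i)"
    unfolding face_def degen_def using Mm_comp[OF eta_lp epsS_lp] by simp
  finally show ?thesis .
qed

lemma M3b: "j \<le> Suc n \<Longrightarrow> i = j \<or> i = Suc j \<Longrightarrow> i \<le> Suc n \<Longrightarrow> cmp (d n i) (s n j) = one n"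
proof -
  assume a: "j \<le> Suc n" "i = j \<or> i = Suc j" "i \<le> Suc n"
  have "cmp (d n i) (s n j) = Mm n n (eta n j \<circ> eps (Suc n) i)"
    unfolding face_def degen_def using Mm_comp[OF epsS_lp eta_lp] by simp
  also have "\<dots> = one n" using F3b[OF a] Mm_id by simp
  finally show ?thesis .
qed

lemma M3c: "Suc j < i \<Longrightarrow> i \<le> Suc (Suc n) \<Longrightarrow> cmp (d (Suc n) i) (s (Suc n) j) = cmp (s n j) (d n (i-1))"
proof -
  assume a: "Suc j < i" "i \<le> Suc (Suc n)"
  have "cmp (d (Suc n) i) (s (Suc n) j) = Mm (Suc n) (Suc n) (eta (Suc n) j \<circ> eps (Suc (Suc n)) i)"
    unfolding face_def degen_def using Mm_comp[OF epsS_lp eta_lp] by simp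
  also have "\<dots> = Mm (Suc n) (Suc n) (eps (Suc n) (i - 1) \<circ> eta n j)"
    using F3c[of j i "Suc n"] a by simp
  also have "\<dots> = cmp (s n j) (d n (i-1))"
    unfolding face_def degen_def using Mm_comp[OF eta_lp epsS_lp] by simp
  finally show ?thesis .
qed

lemma M4: "i \<le> j \<Longrightarrow> j \<le> Suc n \<Longrightarrow> cmp (s (Suc n) i) (s n j) = cmp (s (Suc n) (Suc j)) (s n i)"
proof -
  assume a: "i \<le> j" "j \<le> Suc n"
  have "cmp (s (Suc n) i) (s n j) = Mm (Suc (Suc n)) n (eta n j \<circ> eta (Suc n) i)"
    unfolding degen_def using Mm_comp[OF eta_lp eta_lp] by simp
  also have "\<dots> = Mm (Suc (Suc n)) n (eta n i \<circ> eta (Suc n) (Suc j))"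
    using F4[OF a] by simp
  also have "\<dots> = cmp (s (Suc n) (Suc j)) (s n i)"
    unfolding degen_def using Mm_comp[OF eta_lp eta_lp] by simp
  finally show ?thesis .
qed

lemma mpow_t: "mpow C (Mo n) (t n) k = Mm n n (\<lambda>x. x + int k)"
proof (induction k)
  case 0
  have "(\<lambda>x::int. x + int 0) = id" by auto
  then show ?case using Mm_id by simp
next
  case (Suc k)
  have "mpow C (Mo n) (t n) (Suc k) = cmp (t n) (Mm n n (\<lambda>x. x + int k))" using Suc by simp
  also have "\<dots> = Mm n n ((\<lambda>x. x + int k) \<circ> tau n)"
    unfolding tmap_def using Mm_comp[OF tau_lp shift_lp] by simp
  finally show ?case unfolding shift_comp .
qed

lemma shift_lp': "lam_plus n n (\<lambda>x. x + (int k + 1))"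
  unfolding lam_plus_def lam_inf_def by (auto simp: mono_def)

lemma M6: "lam_plus m n f \<Longrightarrow> cmp (Mm m n f) (T n) = cmp (T m) (Mm m n f)"
proof -
  assume f: "lam_plus m n f"
  have e: "\<And>k. (\<lambda>x::int. x + int (Suc k)) = (\<lambda>x. x + (int k + 1))" by auto
  have "cmp (Mm m n f) (T n) = cmp (Mm m n f) (Mm n n (\<lambda>x. x + (int n + 1)))"
    unfolding mpow_t e ..
  also have "\<dots> = Mm m n ((\<lambda>x. x + (int n + 1)) \<circ> f)"
    using Mm_comp[OF f shift_lp'] by simp
  also have "\<dots> = Mm m n (f \<circ> (\<lambda>x. x + (int m + 1)))" using F6 f lp_inf by metis
  also have "\<dots> = cmp (Mm m m (\<lambda>x. x + (int m + 1))) (Mm m n f)"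
    using Mm_comp[OF shift_lp' f] by simp
  also have "\<dots> = cmp (T m) (Mm m n f)" unfolding mpow_t e ..
  finally show ?thesis .
qed

lemma T_ty[simp]: "ar (T n)" "dm (T n) = Mo n" "cd (T n) = Mo n" by simp_all

lemma T_d: "cmp (d n i) (T (Suc n)) = cmp (T n) (d n i)"
  unfolding face_def using M6[OF epsS_lp] by simp
lemma T_s: "cmp (s n i) (T n) = cmp (T (Suc n)) (s n i)"
  unfolding degen_def using M6[OF eta_lp] by simp
lemma T_t: "cmp (t n) (T n) = cmp (T n) (t n)"
  using M6[OF tau_lp, of n] by (simp only: tmap_def)

end

context DUP begin

lemmas alg = assoc sub_l sub_r dist_l dist_r msgn_l msgn_r ngt_l ngt_r id_l id_r zer_l zer_r

lemma tl: "cmp a b = cmp c e \<Longrightarrow> ar x \<Longrightarrow> ar a \<Longrightarrow> ar b \<Longrightarrow> ar c \<Longrightarrow> ar e \<Longrightarrow> cd b = dm a \<Longrightarrow>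
  cd e = dm c \<Longrightarrow> cd x = dm b \<Longrightarrow> dm b = dm e \<Longrightarrow> cmp a (cmp b x) = cmp c (cmp e x)"
  by (metis assoc)

lemma pf_Suc: "pf (Suc m) k = msub C (one (Suc m)) (cmp (s m (k-1)) (d m k))"
  by (simp add: pfac_def)

lemma pf_ty[simp]: "ar (pf (Suc m) k)" "dm (pf (Suc m) k) = Mo (Suc m)" "cd (pf (Suc m) k) = Mo (Suc m)"
  by (simp_all add: pf_Suc)

lemma pp_ty[simp]: "ar (pp (Suc m) k)" "dm (pp (Suc m) k) = Mo (Suc m)" "cd (pp (Suc m) k) = Mo (Suc m)"
  by (induction k) simp_all

lemma P_ty[simp]: "ar (P n)" "dm (P n) = Mo n" "cd (P n) = Mo n"
  unfolding pmap_def by (cases n; simp)+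

lemma pp_Suc: "pp n (Suc k) = cmp (pp n k) (pf n (Suc k))" by simp

lemma D1a:
  assumes "1 \<le> k" "k < j" "j \<le> Suc m"
  shows "cmp (d m j) (pf (Suc m) k) = cmp (pf m k) (d m j)"
proof -
  obtain m' where m: "m = Suc m'" using assms by (cases m) auto
  have e1: "cmp (d m j) (s m (k-1)) = cmp (s m' (k-1)) (d m' (j-1))"
    unfolding m by (rule M3c) (use assms m in auto)
  have e2: "cmp (d m' (j-1)) (d m k) = cmp (d m' k) (d m j)"
    unfolding m by (rule M2[symmetric]) (use assms m in auto)
  have "cmp (d m j) (pf (Suc m) k) = msub C (d m j) (cmp (d m j) (cmp (s m (k-1)) (d m k)))"
    by (simp add: pf_Suc alg)
  also have "\<dots> = msub C (d m j) (cmp (s m' (k-1)) (cmp (d m' (j-1)) (d m k)))"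
    using tl[OF e1, of "d m k"] m by simp
  also have "\<dots> = msub C (d m j) (cmp (s m' (k-1)) (cmp (d m' k) (d m j)))"
    unfolding e2 ..
  also have "\<dots> = cmp (pf m k) (d m j)"
    unfolding m pf_Suc by (simp add: alg)
  finally show ?thesis .
qed

lemma D1b: "k < j \<Longrightarrow> j \<le> Suc m \<Longrightarrow> cmp (d m j) (pp (Suc m) k) = cmp (pp m k) (d m j)"
proof (induction k)
  case 0 then show ?case by (simp add: alg)
next
  case (Suc k)
  obtain m' where m: "m = Suc m'" using Suc by (cases m) auto
  have "cmp (d m j) (pp (Suc m) (Suc k)) = cmp (cmp (d m j) (pp (Suc m) k)) (pf (Suc m) (Suc k))"
    by (simp add: alg)
  also have "\<dots> = cmp (pp m k) (cmp (d m j) (pf (Suc m) (Suc k)))"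
    using Suc m by (simp add: alg)
  also have "\<dots> = cmp (pp m k) (cmp (pf m (Suc k)) (d m j))"
    using D1a[of "Suc k" j m] Suc by simp
  also have "\<dots> = cmp (pp m (Suc k)) (d m j)" using m by (simp add: alg)
  finally show ?case .
qed

lemma D1c: "1 \<le> j \<Longrightarrow> j \<le> k \<Longrightarrow> k \<le> Suc m \<Longrightarrow> cmp (d m j) (pp (Suc m) k) = zer (Mo (Suc m)) (Mo m)"
proof (induction k)
  case 0 then show ?case by simp
next
  case (Suc k)
  show ?case
  proof (cases "j = Suc k")
    case True
    have "cmp (d m j) (pp (Suc m) (Suc k)) = cmp (cmp (d m j) (pp (Suc m) k)) (pf (Suc m) (Suc k))"
      by (simp add: alg)
    also have "\<dots> = cmp (cmp (pp m k) (d m j)) (pf (Suc m) j)" using D1b[of k j m] Suc True by simp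
    also have "\<dots> = cmp (pp m k) (cmp (d m j) (pf (Suc m) j))"
    proof (cases m)
      case 0 then have "k = 0" using Suc True by simp
      then show ?thesis by (simp add: alg)
    next
      case (Suc m') then show ?thesis by (simp add: alg)
    qed
    also have "cmp (d m j) (pf (Suc m) j) = msub C (d m j) (cmp (cmp (d m j) (s m (j-1))) (d m j))"
      by (simp add: pf_Suc alg)
    also have "cmp (d m j) (s m (j-1)) = one m" by (rule M3b) (use Suc True in auto)
    finally have e: "cmp (d m j) (pp (Suc m) (Suc k)) =
      cmp (pp m k) (msub C (d m j) (cmp (one m) (d m j)))" .
    show ?thesis
    proof (cases m)
      case 0 then have "k = 0" using Suc True by simp
      then show ?thesis using e 0 by (simp add: alg sub_self)
    next
      case (Suc m') then show ?thesis using e by (simp add: alg sub_self)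
    qed
  next
    case False
    then have "cmp (d m j) (pp (Suc m) (Suc k)) = cmp (cmp (d m j) (pp (Suc m) k)) (pf (Suc m) (Suc k))"
      by (simp add: alg)
    then show ?thesis using Suc False by (simp add: alg)
  qed
qed

lemma D1: "1 \<le> j \<Longrightarrow> j \<le> Suc m \<Longrightarrow> cmp (d m j) (P (Suc m)) = zer (Mo (Suc m)) (Mo m)"
  unfolding pmap_def by (rule D1c) auto

lemma P_iota: "cmp (P n) (iota n) = iota n"
proof -
  have "cmp (P n) (iota n) = cmp (iota n) (cmp (r n) (iota n))"
    by (simp add: iota_r[symmetric] alg)
  then show ?thesis by (simp add: r_iota alg)
qed

lemma r_P: "cmp (r n) (P n) = r n"
proof -
  have "cmp (r n) (P n) = cmp (cmp (r n) (iota n)) (r n)"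
    by (simp add: iota_r[symmetric] alg)
  then show ?thesis by (simp add: r_iota alg)
qed

lemma d_iota: "1 \<le> j \<Longrightarrow> j \<le> Suc m \<Longrightarrow> cmp (d m j) (iota (Suc m)) = zer (N (Suc m)) (Mo m)"
proof -
  assume a: "1 \<le> j" "j \<le> Suc m"
  have "cmp (d m j) (iota (Suc m)) = cmp (cmp (d m j) (P (Suc m))) (iota (Suc m))"
    by (simp add: alg P_iota)
  then show ?thesis using D1[OF a] by (simp add: alg)
qed

lemma D2:
  assumes y: "ar y" "cd y = Mo (Suc m)"
    and z: "\<And>j. 1 \<le> j \<Longrightarrow> j \<le> Suc m \<Longrightarrow> cmp (d m j) y = zer (dm y) (Mo m)"
  shows "cmp (P (Suc m)) y = y"
proof -
  have H: "k \<le> Suc m \<Longrightarrow> cmp (pp (Suc m) k) y = y" for k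
  proof (induction k)
    case 0 then show ?case using y by (simp add: alg)
  next
    case (Suc k)
    have "cmp (pp (Suc m) (Suc k)) y = cmp (pp (Suc m) k) (cmp (pf (Suc m) (Suc k)) y)"
      using y by (simp add: alg)
    also have "cmp (pf (Suc m) (Suc k)) y = y" using y z[of "Suc k"] Suc by (simp add: pf_Suc alg sub_zer)
    finally show ?case using Suc by simp
  qed
  show ?thesis unfolding pmap_def by (rule H) simp
qed

lemma fixN:
  assumes y: "ar y" "cd y = Mo n"
    and z: "\<And>j m. n = Suc m \<Longrightarrow> 1 \<le> j \<Longrightarrow> j \<le> n \<Longrightarrow> cmp (d m j) y = zer (dm y) (Mo m)"
  shows "cmp (iota n) (cmp (r n) y) = y"
proof -
  have "cmp (iota n) (cmp (r n) y) = cmp (P n) y" using y by (simp add: iota_r[symmetric] alg)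
  also have "\<dots> = y"
  proof (cases n)
    case 0 then show ?thesis using y by (simp add: pmap_def alg)
  next
    case (Suc m) then show ?thesis using D2[of y m] y z by simp
  qed
  finally show ?thesis .
qed

lemma D3a:
  assumes "j < k" "k \<le> m"
  shows "cmp (pf (Suc m) (Suc k)) (s m j) = cmp (s m j) (pf m k)"
proof -
  obtain m' where m: "m = Suc m'" using assms by (cases m) auto
  have e1: "cmp (d m (Suc k)) (s m j) = cmp (s m' j) (d m' k)"
    unfolding m using M3c[of j "Suc k" m'] assms m by simp
  have e2: "cmp (s m k) (s m' j) = cmp (s m j) (s m' (k-1))"
    unfolding m using M4[of j "k-1" m'] assms m by simp
  have "cmp (pf (Suc m) (Suc k)) (s m j) = msub C (s m j) (cmp (s m k) (cmp (d m (Suc k)) (s m j)))"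
    by (simp add: pf_Suc alg)
  also have "\<dots> = msub C (s m j) (cmp (s m j) (cmp (s m' (k-1)) (d m' k)))"
    unfolding e1 using tl[OF e2, of "d m' k"] m by simp
  also have "\<dots> = cmp (s m j) (pf m k)" unfolding m pf_Suc by (simp add: alg)
  finally show ?thesis .
qed

lemma D3b: "j < k \<Longrightarrow> k \<le> Suc m \<Longrightarrow> cmp (pp (Suc m) k) (s m j) = zer (Mo m) (Mo (Suc m))"
proof (induction k)
  case 0 then show ?case by simp
next
  case (Suc k)
  show ?case
  proof (cases "j = k")
    case True
    have "cmp (pf (Suc m) (Suc j)) (s m j) = msub C (s m j) (cmp (s m j) (cmp (d m (Suc j)) (s m j)))"
      by (simp add: pf_Suc alg)
    also have "cmp (d m (Suc j)) (s m j) = one m" by (rule M3b) (use Suc True in auto)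
    finally have "cmp (pf (Suc m) (Suc j)) (s m j) = zer (Mo m) (Mo (Suc m))" by (simp add: alg sub_self)
    then show ?thesis using True by (simp add: alg)
  next
    case False
    then have jk: "j < k" using Suc by simp
    obtain m' where m: "m = Suc m'" using Suc jk by (cases m) auto
    have a1: "cmp (pf (Suc m) (Suc k)) (s m j) = cmp (s m j) (pf m k)"
      by (rule D3a) (use jk Suc.prems in auto)
    have "cmp (pp (Suc m) (Suc k)) (s m j) = cmp (pp (Suc m) k) (cmp (s m j) (pf m k))"
      by (simp add: alg a1)
    also have "\<dots> = cmp (cmp (pp (Suc m) k) (s m j)) (pf m k)"
      by (rule assoc[symmetric]) (simp_all add: m)
    also have "\<dots> = zer (Mo m) (Mo (Suc m))" using Suc.IH jk Suc.prems m by (simp add: zer_l)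
    finally show ?thesis .
  qed
qed

lemma D3: "j \<le> m \<Longrightarrow> cmp (P (Suc m)) (s m j) = zer (Mo m) (Mo (Suc m))"
  unfolding pmap_def by (rule D3b) auto

lemma r_s: "j \<le> m \<Longrightarrow> cmp (r (Suc m)) (s m j) = zer (Mo m) (N (Suc m))"
proof -
  assume a: "j \<le> m"
  have "cmp (r (Suc m)) (s m j) = cmp (cmp (r (Suc m)) (P (Suc m))) (s m j)"
    by (simp only: r_P)
  also have "\<dots> = cmp (r (Suc m)) (cmp (P (Suc m)) (s m j))" by (simp add: alg)
  finally show ?thesis using D3[OF a] by (simp add: zer_r)
qed

lemma D4:
  assumes F: "ar F" "dm F = Mo (Suc m)" and z: "\<And>j. j \<le> m \<Longrightarrow> cmp F (s m j) = zer (Mo m) (cd F)"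
  shows "cmp F (P (Suc m)) = F"
proof -
  have H: "k \<le> Suc m \<Longrightarrow> cmp F (pp (Suc m) k) = F" for k
  proof (induction k)
    case 0 then show ?case using F by (simp add: alg)
  next
    case (Suc k)
    have "cmp F (pp (Suc m) (Suc k)) = cmp (cmp F (pp (Suc m) k)) (pf (Suc m) (Suc k))"
      using F by (simp add: alg)
    also have "\<dots> = cmp F (pf (Suc m) (Suc k))" using Suc by simp
    also have "\<dots> = msub C F (cmp (cmp F (s m k)) (d m (Suc k)))" using F by (simp add: pf_Suc alg)
    also have "\<dots> = F" using z[of k] Suc F by (simp add: alg sub_zer)
    finally show ?case .
  qed
  show ?thesis unfolding pmap_def by (rule H) simp
qed

end

context DUP begin

abbreviation "sg m \<equiv> s m (Suc m)"

definition K :: "nat \<Rightarrow> 'm" where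
  "K n = (if n = 0 then t 0 else msub C (t n) (cmp (s (n-1) n) (d (n-1) 0)))"

lemma K_0: "K 0 = t 0" by (simp add: K_def)
lemma K_Suc: "K (Suc m) = msub C (t (Suc m)) (cmp (sg m) (d m 0))" by (simp add: K_def)
lemma K_ty[simp]: "ar (K n)" "dm (K n) = Mo n" "cd (K n) = Mo n"
  by (cases n; simp add: K_0 K_Suc)+

lemma kappa_eq: "kappa C Mm n = msgn C n (K n)"
proof (cases n)
  case 0 then show ?thesis using M1[of 0] by (simp add: kappa_def K_0)
next
  case (Suc m) then show ?thesis using M1[of "Suc m"] by (simp add: kappa_def K_Suc)
qed

lemma t_sj: "1 \<le> j \<Longrightarrow> j \<le> Suc m \<Longrightarrow> cmp (t (Suc m)) (s m j) = cmp (s m (j-1)) (t m)"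
proof -
  assume a: "1 \<le> j" "j \<le> Suc m"
  have e1: "cmp (sg (Suc m)) (s m j) = cmp (s (Suc m) j) (sg m)" using M4[of j "Suc m" m] a by simp
  have e2: "cmp (d (Suc m) 0) (s (Suc m) j) = cmp (s m (j-1)) (d m 0)" using M3a[of 0 j m] a by simp
  have "cmp (t (Suc m)) (s m j) = cmp (d (Suc m) 0) (cmp (sg (Suc m)) (s m j))"
    by (simp add: M1[symmetric] alg)
  also have "\<dots> = cmp (cmp (d (Suc m) 0) (s (Suc m) j)) (sg m)" unfolding e1 by (simp add: alg)
  also have "\<dots> = cmp (s m (j-1)) (cmp (d m 0) (sg m))" unfolding e2 by (simp add: alg)
  finally show ?thesis by (simp add: M1)
qed

lemma t_s0: "cmp (t (Suc m)) (s m 0) = sg m"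
proof -
  have e1: "cmp (sg (Suc m)) (s m 0) = cmp (s (Suc m) 0) (sg m)" using M4[of 0 "Suc m" m] by simp
  have e2: "cmp (d (Suc m) 0) (s (Suc m) 0) = one (Suc m)" by (rule M3b) auto
  have "cmp (t (Suc m)) (s m 0) = cmp (d (Suc m) 0) (cmp (sg (Suc m)) (s m 0))"
    by (simp add: M1[symmetric] alg)
  also have "\<dots> = cmp (cmp (d (Suc m) 0) (s (Suc m) 0)) (sg m)" unfolding e1 by (simp add: alg)
  finally show ?thesis unfolding e2 by (simp add: alg)
qed

lemma K5: "cmp (t (Suc m)) (sg m) = cmp (s m m) (t m)"
  using t_sj[of "Suc m" m] by simp

lemma SS: "cmp (sg (Suc m)) (sg m) = cmp (s (Suc m) (Suc m)) (sg m)"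
  using M4[of "Suc m" "Suc m" m] by simp

lemma dsg_top: "cmp (d m (Suc m)) (sg m) = one m" by (rule M3b) auto

lemma dsg_mid: "1 \<le> i \<Longrightarrow> i \<le> Suc m \<Longrightarrow> cmp (d (Suc m) i) (sg (Suc m)) = cmp (sg m) (d m i)"
  using M3a[of i "Suc (Suc m)" m] by simp

lemma K1:
  assumes "1 \<le> i" "i \<le> m"
  shows "cmp (d m i) (K (Suc m)) = cmp (K m) (d m (Suc i))"
proof -
  obtain m' where m: "m = Suc m'" using assms by (cases m) auto
  have e1: "cmp (d m i) (d (Suc m) 0) = cmp (d m 0) (d (Suc m) (Suc i))" using M2[of 0 "Suc i" m] assms by simp
  have e2: "cmp (d (Suc m) (Suc i)) (sg (Suc m)) = cmp (sg m) (d m (Suc i))" using dsg_mid[of "Suc i" m] assms by simp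
  have e3: "cmp (d m i) (sg m) = cmp (sg m') (d m' i)" using dsg_mid[of i m'] assms m by simp
  have e4: "cmp (d m' i) (d m 0) = cmp (d m' 0) (d m (Suc i))" using M2[of 0 "Suc i" m'] assms m by simp
  have a: "cmp (d m i) (t (Suc m)) = cmp (t m) (d m (Suc i))"
  proof -
    have "cmp (d m i) (t (Suc m)) = cmp (cmp (d m i) (d (Suc m) 0)) (sg (Suc m))"
      by (simp add: M1[symmetric] alg)
    also have "\<dots> = cmp (d m 0) (cmp (d (Suc m) (Suc i)) (sg (Suc m)))"
      unfolding e1 by (simp add: alg)
    also have "\<dots> = cmp (cmp (d m 0) (sg m)) (d m (Suc i))" unfolding e2 by (simp add: alg)
    finally show ?thesis by (simp add: M1)
  qed
  have b: "cmp (d m i) (cmp (sg m) (d m 0)) = cmp (sg m') (cmp (d m' 0) (d m (Suc i)))"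
  proof -
    have "cmp (d m i) (cmp (sg m) (d m 0)) = cmp (cmp (d m i) (sg m)) (d m 0)" by (simp add: alg)
    also have "\<dots> = cmp (sg m') (cmp (d m' i) (d m 0))" unfolding e3 using m by (simp add: alg)
    finally show ?thesis unfolding e4 .
  qed
  have "cmp (d m i) (K (Suc m)) = msub C (cmp (t m) (d m (Suc i))) (cmp (sg m') (cmp (d m' 0) (d m (Suc i))))"
    unfolding K_Suc using a b by (simp add: alg)
  also have "\<dots> = cmp (K m) (d m (Suc i))" unfolding m K_Suc by (simp add: alg)
  finally show ?thesis .
qed

lemma K2: "cmp (d m (Suc m)) (K (Suc m)) = zer (Mo (Suc m)) (Mo m)"
proof -
  have e1: "cmp (d m (Suc m)) (d (Suc m) 0) = cmp (d m 0) (d (Suc m) (Suc (Suc m)))"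
    using M2[of 0 "Suc (Suc m)" m] by simp
  have e2: "cmp (d (Suc m) (Suc (Suc m))) (sg (Suc m)) = one (Suc m)" by (rule dsg_top)
  have a: "cmp (d m (Suc m)) (t (Suc m)) = d m 0"
  proof -
    have "cmp (d m (Suc m)) (t (Suc m)) = cmp (cmp (d m (Suc m)) (d (Suc m) 0)) (sg (Suc m))"
      by (simp add: M1[symmetric] alg)
    also have "\<dots> = cmp (d m 0) (cmp (d (Suc m) (Suc (Suc m))) (sg (Suc m)))" unfolding e1 by (simp add: alg)
    finally show ?thesis unfolding e2 by (simp add: alg)
  qed
  have b: "cmp (d m (Suc m)) (cmp (sg m) (d m 0)) = d m 0"
  proof -
    have "cmp (d m (Suc m)) (cmp (sg m) (d m 0)) = cmp (cmp (d m (Suc m)) (sg m)) (d m 0)" by (simp add: alg)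
    then show ?thesis unfolding dsg_top by (simp add: alg)
  qed
  show ?thesis unfolding K_Suc using a b by (simp add: alg sub_self)
qed

lemma K3: "cmp (d m 0) (K (Suc m)) = cmp (t m) (msub C (d m 1) (d m 0))"
proof -
  have e1: "cmp (d m 0) (d (Suc m) 0) = cmp (d m 0) (d (Suc m) 1)" using M2[of 0 1 m] by simp
  have e2: "cmp (d (Suc m) 1) (sg (Suc m)) = cmp (sg m) (d m 1)" using dsg_mid[of 1 m] by simp
  have a: "cmp (d m 0) (t (Suc m)) = cmp (t m) (d m 1)"
  proof -
    have "cmp (d m 0) (t (Suc m)) = cmp (cmp (d m 0) (d (Suc m) 0)) (sg (Suc m))"
      by (simp add: M1[symmetric] alg)
    also have "\<dots> = cmp (d m 0) (cmp (d (Suc m) 1) (sg (Suc m)))" unfolding e1 by (simp add: alg)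
    also have "\<dots> = cmp (cmp (d m 0) (sg m)) (d m 1)" unfolding e2 by (simp add: alg)
    finally show ?thesis by (simp add: M1)
  qed
  have b: "cmp (d m 0) (cmp (sg m) (d m 0)) = cmp (t m) (d m 0)"
  proof -
    have "cmp (d m 0) (cmp (sg m) (d m 0)) = cmp (cmp (d m 0) (sg m)) (d m 0)" by (simp add: alg)
    then show ?thesis by (simp add: M1)
  qed
  show ?thesis unfolding K_Suc using a b by (simp add: alg)
qed

lemma K3': "cmp (K m) (msub C (d m 1) (d m 0)) = cmp (t m) (msub C (d m 1) (d m 0))"
proof (cases m)
  case 0 then show ?thesis by (simp add: K_0)
next
  case (Suc m')
  have e: "cmp (d m' 0) (d m 1) = cmp (d m' 0) (d m 0)" using M2[of 0 1 m'] Suc by simp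
  have "cmp (cmp (sg m') (d m' 0)) (msub C (d m 1) (d m 0)) = zer (Mo (Suc m)) (Mo m)"
  proof -
    have "cmp (cmp (sg m') (d m' 0)) (msub C (d m 1) (d m 0))
        = cmp (sg m') (msub C (cmp (d m' 0) (d m 1)) (cmp (d m' 0) (d m 0)))"
      using Suc by (simp add: alg)
    then show ?thesis unfolding e using Suc by (simp add: sub_self zer_r)
  qed
  then show ?thesis unfolding Suc K_Suc using Suc by (simp add: sub_r sub_zer)
qed

lemma K4a: "cmp (K (Suc m)) (s m 0) = zer (Mo m) (Mo (Suc m))"
proof -
  have "cmp (cmp (sg m) (d m 0)) (s m 0) = sg m"
  proof -
    have "cmp (cmp (sg m) (d m 0)) (s m 0) = cmp (sg m) (cmp (d m 0) (s m 0))" by (simp add: alg)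
    also have "cmp (d m 0) (s m 0) = one m" by (rule M3b) auto
    finally show ?thesis by (simp add: alg)
  qed
  then show ?thesis unfolding K_Suc by (simp add: sub_r t_s0 sub_self)
qed

lemma K4b:
  assumes "1 \<le> j" "j \<le> m"
  shows "cmp (K (Suc m)) (s m j) = cmp (s m (j-1)) (K m)"
proof -
  obtain m' where m: "m = Suc m'" using assms by (cases m) auto
  have e1: "cmp (d m 0) (s m j) = cmp (s m' (j-1)) (d m' 0)" using M3a[of 0 j m'] assms m by simp
  have e2: "cmp (sg m) (s m' (j-1)) = cmp (s m (j-1)) (sg m')" using M4[of "j-1" "Suc m'" m'] assms m by simp
  have b: "cmp (cmp (sg m) (d m 0)) (s m j) = cmp (s m (j-1)) (cmp (sg m') (d m' 0))"
  proof -
    have "cmp (cmp (sg m) (d m 0)) (s m j) = cmp (sg m) (cmp (d m 0) (s m j))" by (simp add: alg)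
    also have "\<dots> = cmp (cmp (sg m) (s m' (j-1))) (d m' 0)" unfolding e1 using m by (simp add: alg)
    also have "\<dots> = cmp (s m (j-1)) (cmp (sg m') (d m' 0))" unfolding e2 using m by (simp add: alg)
    finally show ?thesis .
  qed
  have a: "cmp (t (Suc m)) (s m j) = cmp (s m (j-1)) (t m)" using t_sj[of j m] assms by simp
  show ?thesis unfolding K_Suc using a b m by (simp add: sub_r sub_l K_Suc)
qed

end

context DUP begin

abbreviation "eN n \<equiv> idt (N n)"

definition "kk n = cmp (r n) (cmp (K n) (iota n))"
definition "b m = cmp (r m) (cmp (d m 0) (iota (Suc m)))"
definition "BB m = cmp (r (Suc m)) (cmp (sg m) (iota m))"
definition "th n = cmp (r n) (cmp (t n) (iota n))"

lemma kk_ty[simp]: "ar (kk n)" "dm (kk n) = N n" "cd (kk n) = N n" by (simp_all add: kk_def)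
lemma b_ty[simp]: "ar (b n)" "dm (b n) = N (Suc n)" "cd (b n) = N n" by (simp_all add: b_def)
lemma BB_ty[simp]: "ar (BB n)" "dm (BB n) = N n" "cd (BB n) = N (Suc n)" by (simp_all add: BB_def)
lemma th_ty[simp]: "ar (th n)" "dm (th n) = N n" "cd (th n) = N n" by (simp_all add: th_def)

lemma N1: "cmp (K n) (iota n) = cmp (iota n) (kk n)"
proof -
  have "cmp (iota n) (cmp (r n) (cmp (K n) (iota n))) = cmp (K n) (iota n)"
  proof (rule fixN)
    fix j m assume n: "n = Suc m" and j: "1 \<le> j" "j \<le> n"
    show "cmp (d m j) (cmp (K n) (iota n)) = zer (dm (cmp (K n) (iota n))) (Mo m)"
    proof (cases "j = Suc m")
      case True
      have "cmp (d m j) (cmp (K n) (iota n)) = cmp (cmp (d m (Suc m)) (K (Suc m))) (iota n)"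
        using True n by (simp add: alg)
      then show ?thesis using n by (simp add: K2 zer_l)
    next
      case False
      then have "j \<le> m" using j n by simp
      have "cmp (d m j) (cmp (K n) (iota n)) = cmp (cmp (d m j) (K (Suc m))) (iota n)"
        using n by (simp add: alg)
      also have "\<dots> = cmp (K m) (cmp (d m (Suc j)) (iota (Suc m)))"
        using K1[of j m] j \<open>j \<le> m\<close> n by (simp add: alg)
      finally show ?thesis using d_iota[of "Suc j" m] \<open>j \<le> m\<close> n by (simp add: zer_r)
    qed
  qed simp_all
  then show ?thesis unfolding kk_def by simp
qed

lemma N2: "cmp (r n) (K n) = cmp (kk n) (r n)"
proof -
  have H: "cmp (cmp (r n) (K n)) (P n) = cmp (r n) (K n)"
  proof (cases n)
    case 0 then show ?thesis by (simp add: pmap_def alg)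
  next
    case (Suc m)
    show ?thesis unfolding Suc
    proof (rule D4)
      fix j assume j: "j \<le> m"
      show "cmp (cmp (r (Suc m)) (K (Suc m))) (s m j) = zer (Mo m) (cd (cmp (r (Suc m)) (K (Suc m))))"
      proof (cases j)
        case 0 then show ?thesis by (simp add: alg K4a)
      next
        case (Suc j')
        have "cmp (cmp (r (Suc m)) (K (Suc m))) (s m j) = cmp (r (Suc m)) (cmp (s m (j-1)) (K m))"
          using K4b[of j m] j Suc by (simp add: alg)
        also have "\<dots> = cmp (cmp (r (Suc m)) (s m (j-1))) (K m)" by (simp add: alg)
        finally show ?thesis using r_s[of "j-1" m] j by (simp add: zer_l)
      qed
    qed simp_all
  qed
  have "cmp (r n) (K n) = cmp (cmp (r n) (K n)) (cmp (iota n) (r n))" using H by (simp add: iota_r)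
  also have "\<dots> = cmp (kk n) (r n)" by (simp add: alg kk_def)
  finally show ?thesis .
qed

lemma N3: "cmp (d m 0) (iota (Suc m)) = cmp (iota m) (b m)"
proof -
  have "cmp (iota m) (cmp (r m) (cmp (d m 0) (iota (Suc m)))) = cmp (d m 0) (iota (Suc m))"
  proof (rule fixN)
    fix j m' assume m: "m = Suc m'" and j: "1 \<le> j" "j \<le> m"
    have e: "cmp (d m' j) (d m 0) = cmp (d m' 0) (d m (Suc j))" using M2[of 0 "Suc j" m'] m j by simp
    have "cmp (d m' j) (cmp (d m 0) (iota (Suc m))) = cmp (d m' 0) (cmp (d m (Suc j)) (iota (Suc m)))"
      using tl[OF e, of "iota (Suc m)"] m by simp
    then show "cmp (d m' j) (cmp (d m 0) (iota (Suc m))) = zer (dm (cmp (d m 0) (iota (Suc m)))) (Mo m')"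
      using d_iota[of "Suc j" m] j m by (simp add: zer_r)
  qed simp_all
  then show ?thesis unfolding b_def by simp
qed

lemma N4: "cmp (b m) (kk (Suc m)) = ngt (cmp (kk m) (b m))"
proof -
  have "cmp (b m) (kk (Suc m)) = cmp (r m) (cmp (d m 0) (cmp (iota (Suc m)) (kk (Suc m))))"
    by (simp add: b_def alg)
  also have "\<dots> = cmp (r m) (cmp (cmp (d m 0) (K (Suc m))) (iota (Suc m)))" by (simp add: N1[symmetric] alg)
  also have "\<dots> = cmp (r m) (cmp (cmp (K m) (msub C (d m 1) (d m 0))) (iota (Suc m)))"
    by (simp only: K3 K3')
  also have "\<dots> = cmp (r m) (cmp (K m) (msub C (cmp (d m 1) (iota (Suc m))) (cmp (d m 0) (iota (Suc m)))))"
    by (simp add: alg)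
  also have "\<dots> = ngt (cmp (cmp (r m) (K m)) (cmp (d m 0) (iota (Suc m))))"
    using d_iota[of 1 m] by (simp add: zer_sub alg)
  also have "\<dots> = ngt (cmp (kk m) (b m))" by (simp add: N2 b_def alg)
  finally show ?thesis .
qed

lemma L1: "cmp (r (Suc m)) (cmp (sg m) (cmp (K m) (iota m))) = cmp (r (Suc m)) (cmp (sg m) (cmp (t m) (iota m)))"
proof (cases m)
  case 0 then show ?thesis by (simp add: K_0)
next
  case (Suc m')
  have e: "cmp (sg m) (cmp (sg m') (cmp (d m' 0) (iota m))) = cmp (s m m) (cmp (sg m') (cmp (d m' 0) (iota m)))"
    using tl[OF SS[of m'], of "cmp (d m' 0) (iota m)"] Suc by simp
  have z: "cmp (r (Suc m)) (cmp (sg m) (cmp (sg m') (cmp (d m' 0) (iota m)))) = zer (N m) (N (Suc m))"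
  proof -
    have "cmp (r (Suc m)) (cmp (sg m) (cmp (sg m') (cmp (d m' 0) (iota m))))
       = cmp (cmp (r (Suc m)) (s m m)) (cmp (sg m') (cmp (d m' 0) (iota m)))"
      unfolding e using Suc by (simp add: alg)
    then show ?thesis using r_s[of m m] Suc by (simp add: zer_l)
  qed
  have "cmp (r (Suc m)) (cmp (sg m) (cmp (K m) (iota m))) =
     msub C (cmp (r (Suc m)) (cmp (sg m) (cmp (t m) (iota m))))
            (cmp (r (Suc m)) (cmp (sg m) (cmp (sg m') (cmp (d m' 0) (iota m)))))"
    unfolding Suc K_Suc using Suc by (simp add: alg)
  then show ?thesis using z by (simp add: sub_zer)
qed

lemma N5: "cmp (BB m) (kk m) = ngt (cmp (kk (Suc m)) (BB m))"
proof -
  have l: "cmp (BB m) (kk m) = cmp (r (Suc m)) (cmp (sg m) (cmp (t m) (iota m)))"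
    unfolding BB_def using L1 by (simp add: alg N1)
  have "cmp (kk (Suc m)) (BB m) = cmp (cmp (r (Suc m)) (K (Suc m))) (cmp (sg m) (iota m))"
    by (simp add: BB_def N2 alg)
  also have "\<dots> = cmp (r (Suc m)) (cmp (cmp (K (Suc m)) (sg m)) (iota m))" by (simp add: alg)
  also have "cmp (K (Suc m)) (sg m) = msub C (cmp (s m m) (t m)) (cmp (sg m) (t m))"
  proof -
    have "cmp (K (Suc m)) (sg m) = msub C (cmp (t (Suc m)) (sg m)) (cmp (sg m) (cmp (d m 0) (sg m)))"
      by (simp add: K_Suc alg)
    then show ?thesis by (simp add: K5 M1)
  qed
  also have "cmp (r (Suc m)) (cmp (msub C (cmp (s m m) (t m)) (cmp (sg m) (t m))) (iota m))
     = msub C (cmp (cmp (r (Suc m)) (s m m)) (cmp (t m) (iota m))) (cmp (r (Suc m)) (cmp (sg m) (cmp (t m) (iota m))))"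
    by (simp add: alg)
  also have "\<dots> = ngt (cmp (r (Suc m)) (cmp (sg m) (cmp (t m) (iota m))))"
    using r_s[of m m] by (simp add: zer_l zer_sub)
  finally show ?thesis using l by simp
qed

lemma N6: "cmp (b m) (b (Suc m)) = zer (N (Suc (Suc m))) (N m)"
proof -
  have e: "cmp (d m 0) (d (Suc m) 0) = cmp (d m 0) (d (Suc m) 1)" using M2[of 0 1 m] by simp
  have "cmp (b m) (b (Suc m)) = cmp (r m) (cmp (d m 0) (cmp (iota (Suc m)) (b (Suc m))))"
    by (simp add: b_def alg)
  also have "\<dots> = cmp (r m) (cmp (cmp (d m 0) (d (Suc m) 0)) (iota (Suc (Suc m))))"
    by (simp add: N3[symmetric] alg)
  also have "\<dots> = cmp (r m) (cmp (d m 0) (cmp (d (Suc m) 1) (iota (Suc (Suc m)))))"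
    unfolding e by (simp add: alg)
  finally show ?thesis using d_iota[of 1 "Suc m"] by (simp add: zer_r)
qed

lemma N7: "cmp (BB (Suc m)) (BB m) = zer (N m) (N (Suc (Suc m)))"
proof -
  have H: "cmp (cmp (r (Suc (Suc m))) (sg (Suc m))) (P (Suc m)) = cmp (r (Suc (Suc m))) (sg (Suc m))"
  proof (rule D4)
    fix j assume j: "j \<le> m"
    have e: "cmp (sg (Suc m)) (s m j) = cmp (s (Suc m) j) (sg m)" using M4[of j "Suc m" m] j by simp
    have "cmp (cmp (r (Suc (Suc m))) (sg (Suc m))) (s m j) = cmp (cmp (r (Suc (Suc m))) (s (Suc m) j)) (sg m)"
      using e by (simp add: alg)
    then show "cmp (cmp (r (Suc (Suc m))) (sg (Suc m))) (s m j) = zer (Mo m) (cd (cmp (r (Suc (Suc m))) (sg (Suc m))))"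
      using r_s[of j "Suc m"] j by (simp add: zer_l)
  qed simp_all
  have "cmp (BB (Suc m)) (BB m) = cmp (cmp (cmp (r (Suc (Suc m))) (sg (Suc m))) (P (Suc m))) (cmp (sg m) (iota m))"
    by (simp add: BB_def iota_r[symmetric] alg)
  also have "\<dots> = cmp (r (Suc (Suc m))) (cmp (cmp (sg (Suc m)) (sg m)) (iota m))" unfolding H by (simp add: alg)
  also have "\<dots> = cmp (cmp (r (Suc (Suc m))) (s (Suc m) (Suc m))) (cmp (sg m) (iota m))" unfolding SS by (simp add: alg)
  finally show ?thesis using r_s[of "Suc m" "Suc m"] by (simp add: zer_l)
qed

lemma N8: "kk (Suc m) = msub C (th (Suc m)) (cmp (BB m) (b m))"
proof -
  have "kk (Suc m) = msub C (th (Suc m)) (cmp (r (Suc m)) (cmp (sg m) (cmp (d m 0) (iota (Suc m)))))"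
    by (simp add: kk_def th_def K_Suc alg)
  then show ?thesis by (simp add: N3 BB_def alg)
qed

lemma N8_0: "kk 0 = th 0" by (simp add: kk_def th_def K_0)

lemma pf_s_low:
  assumes "1 \<le> i" "i < j" "j \<le> m"
  shows "cmp (pf (Suc m) i) (s m j) = cmp (s m j) (pf m i)"
proof -
  obtain m' where m: "m = Suc m'" using assms by (cases m) auto
  have e1: "cmp (d m i) (s m j) = cmp (s m' (j-1)) (d m' i)" using M3a[of i j m'] assms m by simp
  have e2: "cmp (s m (i-1)) (s m' (j-1)) = cmp (s m j) (s m' (i-1))" using M4[of "i-1" "j-1" m'] assms m by simp
  have "cmp (pf (Suc m) i) (s m j) = msub C (s m j) (cmp (s m (i-1)) (cmp (d m i) (s m j)))"
    by (simp add: pf_Suc alg)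
  also have "\<dots> = msub C (s m j) (cmp (s m j) (cmp (s m' (i-1)) (d m' i)))"
    unfolding e1 using tl[OF e2, of "d m' i"] m by simp
  also have "\<dots> = cmp (s m j) (pf m i)" unfolding m pf_Suc by (simp add: alg)
  finally show ?thesis .
qed

lemma pp_s_low: "k < j \<Longrightarrow> j \<le> m \<Longrightarrow> cmp (pp (Suc m) k) (s m j) = cmp (s m j) (pp m k)"
proof (induction k)
  case 0 then show ?case by (simp add: alg)
next
  case (Suc k)
  obtain m' where m: "m = Suc m'" using Suc by (cases m) auto
  have "cmp (pp (Suc m) (Suc k)) (s m j) = cmp (pp (Suc m) k) (cmp (pf (Suc m) (Suc k)) (s m j))"
    by (simp add: alg)
  also have "\<dots> = cmp (pp (Suc m) k) (cmp (s m j) (pf m (Suc k)))" using pf_s_low[of "Suc k" j m] Suc by simp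
  also have "\<dots> = cmp (cmp (pp (Suc m) k) (s m j)) (pf m (Suc k))" using m by (simp add: alg)
  also have "\<dots> = cmp (s m j) (pp m (Suc k))" using Suc m by (simp add: alg)
  finally show ?case .
qed

lemma A_alt: "k \<le> m \<Longrightarrow> cmp (r m) (cmp (d m 0) (cmp (pp (Suc m) k) (s m k))) = msgn C k (r m)"
proof (induction k)
  case 0
  have "cmp (d m 0) (s m 0) = one m" by (rule M3b) auto
  then show ?case by (simp add: alg)
next
  case (Suc k)
  obtain m' where m: "m = Suc m'" using Suc by (cases m) auto
  have e1: "cmp (pf (Suc m) (Suc k)) (s m (Suc k)) = msub C (s m (Suc k)) (s m k)"
  proof -
    have "cmp (d m (Suc k)) (s m (Suc k)) = one m" by (rule M3b) (use Suc in auto)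
    then show ?thesis by (simp add: pf_Suc alg)
  qed
  have z: "cmp (r m) (cmp (d m 0) (cmp (pp (Suc m) k) (s m (Suc k)))) = zer (Mo m) (N m)"
  proof -
    have e2: "cmp (d m 0) (s m (Suc k)) = cmp (s m' k) (d m' 0)" using M3a[of 0 "Suc k" m'] Suc m by simp
    have "cmp (r m) (cmp (d m 0) (cmp (pp (Suc m) k) (s m (Suc k))))
        = cmp (r m) (cmp (d m 0) (cmp (s m (Suc k)) (pp m k)))" using pp_s_low[of k "Suc k" m] Suc by simp
    also have "\<dots> = cmp (cmp (r m) (s m' k)) (cmp (d m' 0) (pp m k))"
      using tl[OF e2, of "pp m k"] m by (simp add: alg)
    finally show ?thesis using r_s[of k m'] Suc m by (simp add: zer_l)
  qed
  have "cmp (r m) (cmp (d m 0) (cmp (pp (Suc m) (Suc k)) (s m (Suc k))))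
      = cmp (r m) (cmp (d m 0) (cmp (pp (Suc m) k) (msub C (s m (Suc k)) (s m k))))"
    using e1[symmetric] by (simp add: alg)
  also have "\<dots> = msub C (cmp (r m) (cmp (d m 0) (cmp (pp (Suc m) k) (s m (Suc k)))))
                         (cmp (r m) (cmp (d m 0) (cmp (pp (Suc m) k) (s m k))))"
    by (simp add: alg)
  also have "\<dots> = msub C (zer (Mo m) (N m)) (msgn C k (r m))" using z Suc by simp
  finally show ?case by (simp add: zer_sub msgn_Suc)
qed

lemma Q_alt: "k \<le> m \<Longrightarrow> cmp (pp (Suc m) k) (cmp (sg m) (iota m)) = cmp (sg m) (iota m)"
proof (induction k)
  case 0 then show ?case by (simp add: alg)
next
  case (Suc k)
  obtain m' where m: "m = Suc m'" using Suc by (cases m) auto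
  have e: "cmp (d m (Suc k)) (sg m) = cmp (sg m') (d m' (Suc k))" using dsg_mid[of "Suc k" m'] Suc m by simp
  have z: "cmp (d m (Suc k)) (cmp (sg m) (iota m)) = zer (N m) (Mo m)"
  proof -
    have "cmp (d m (Suc k)) (cmp (sg m) (iota m)) = cmp (sg m') (cmp (d m' (Suc k)) (iota m))"
      using tl[OF e, of "iota m"] m by simp
    then show ?thesis using d_iota[of "Suc k" m'] Suc m by (simp add: zer_r)
  qed
  have "cmp (pf (Suc m) (Suc k)) (cmp (sg m) (iota m)) = cmp (sg m) (iota m)"
    using z by (simp add: pf_Suc alg sub_zer)
  then show ?case using Suc by (simp add: alg)
qed

lemma N9: "cmp (b m) (BB m) = msub C (th m) (msgn C m (eN m))"
proof -
  have e1: "cmp (pf (Suc m) (Suc m)) (cmp (sg m) (iota m)) = msub C (cmp (sg m) (iota m)) (cmp (s m m) (iota m))"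
  proof -
    have "cmp (pf (Suc m) (Suc m)) (cmp (sg m) (iota m))
       = msub C (cmp (sg m) (iota m)) (cmp (s m m) (cmp (cmp (d m (Suc m)) (sg m)) (iota m)))"
      by (simp add: pf_Suc alg)
    then show ?thesis by (simp add: dsg_top alg)
  qed
  have "cmp (b m) (BB m) = cmp (r m) (cmp (d m 0) (cmp (P (Suc m)) (cmp (sg m) (iota m))))"
    by (simp add: b_def BB_def iota_r[symmetric] alg)
  also have "\<dots> = cmp (r m) (cmp (d m 0) (cmp (pp (Suc m) m) (cmp (pf (Suc m) (Suc m)) (cmp (sg m) (iota m)))))"
    by (simp add: pmap_def alg)
  also have "\<dots> = msub C (cmp (r m) (cmp (d m 0) (cmp (pp (Suc m) m) (cmp (sg m) (iota m)))))
                         (cmp (cmp (r m) (cmp (d m 0) (cmp (pp (Suc m) m) (s m m)))) (iota m))"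
    unfolding e1 by (simp add: alg)
  also have "\<dots> = msub C (cmp (r m) (cmp (cmp (d m 0) (sg m)) (iota m))) (cmp (msgn C m (r m)) (iota m))"
    using Q_alt[of m m] A_alt[of m m] by (simp add: alg)
  also have "\<dots> = msub C (th m) (msgn C m (eN m))" by (simp add: M1 th_def msgn_l r_iota)
  finally show ?thesis .
qed

end

context PA begin

lemmas algp = assoc sub_l sub_r dist_l dist_r msgn_l msgn_r ngt_l ngt_r id_l id_r zer_l zer_r

lemma pls_lcomm: "ar f \<Longrightarrow> ar g \<Longrightarrow> ar h \<Longrightarrow> dm f = dm g \<Longrightarrow> cd f = cd g \<Longrightarrow> dm h = dm f \<Longrightarrow> cd h = cd f
   \<Longrightarrow> pls f (pls g h) = pls g (pls f h)"
  by (metis pls_assoc pls_comm pls_ty(1,2,3))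

lemmas pls_ac = pls_assoc pls_comm pls_lcomm

lemma msgn_pls: "ar f \<Longrightarrow> ar g \<Longrightarrow> dm f = dm g \<Longrightarrow> cd f = cd g \<Longrightarrow>
  msgn C n (pls f g) = pls (msgn C n f) (msgn C n g)"
  unfolding msgn_def by (simp add: ngt_pls)

lemma sub_pls_cancel: "ar x \<Longrightarrow> ar y \<Longrightarrow> dm x = dm y \<Longrightarrow> cd x = cd y \<Longrightarrow> pls (msub C x y) y = x"
  unfolding msub_def
  by (simp add: pls_assoc pls_comm[of "ngt y" y] pls_ngt pls_zer)

lemma sub_eq_zer: "ar x \<Longrightarrow> ar y \<Longrightarrow> dm x = dm y \<Longrightarrow> cd x = cd y \<Longrightarrow> msub C x y = zer (dm x) (cd x) \<Longrightarrow> x = y"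
  by (metis sub_pls_cancel zer_pls)

lemma one_plus_inv:
  assumes f: "f \<in> hom C a c" and g: "g \<in> hom C c a"
    and inv: "invertible C c (pls (idt c) (cmp f g))"
  shows "invertible C a (pls (idt a) (cmp g f))"
proof -
  obtain W where W: "W \<in> hom C c c" "cmp W (pls (idt c) (cmp f g)) = idt c" "cmp (pls (idt c) (cmp f g)) W = idt c"
    using inv unfolding invertible_def by blast
  have ty: "ar f" "ar g" "ar W" "dm f = a" "cd f = c" "dm g = c" "cd g = a" "dm W = c" "cd W = c"
    using f g W by (auto simp: hom_iff)
  have a: "a \<in> ob" "c \<in> ob" using ty by (metis dom_ob)+
  let ?V = "msub C (idt a) (cmp g (cmp W f))"
  show ?thesis
  proof (rule invertibleI2[of _ _ ?V ?V])
    have "cmp (pls (idt a) (cmp g f)) ?V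
      = msub C (pls (idt a) (cmp g f)) (cmp g (cmp (pls (idt c) (cmp f g)) (cmp W f)))"
      using ty a unfolding msub_def by (simp add: algp ngt_pls pls_ac)
    also have "cmp (pls (idt c) (cmp f g)) (cmp W f) = f"
      using W(3) ty a by (simp add: assoc[symmetric] id_l)
    finally show "cmp (pls (idt a) (cmp g f)) ?V = idt a"
      using ty a unfolding msub_def by (simp add: pls_assoc pls_ngt pls_zer)
    have "cmp ?V (pls (idt a) (cmp g f))
      = msub C (pls (idt a) (cmp g f)) (cmp g (cmp (cmp W (pls (idt c) (cmp f g))) f))"
      using ty a unfolding msub_def by (simp add: algp ngt_pls pls_ac)
    also have "cmp W (pls (idt c) (cmp f g)) = idt c" by (rule W(2))
    finally show "cmp ?V (pls (idt a) (cmp g f)) = idt a"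
      using ty a unfolding msub_def by (simp add: pls_assoc pls_ngt pls_zer id_l)
  qed (use ty a in \<open>auto simp: hom_iff\<close>)
qed

end

context DUP begin

lemma M1t: "ar x \<Longrightarrow> cd x = Mo n \<Longrightarrow> cmp (d n 0) (cmp (sg n) x) = cmp (t n) x"
  by (simp add: M1[symmetric] alg)

definition "TT n = mpow C (Mo n) (t n) (Suc n)"
lemma TT_ty[simp]: "ar (TT n)" "dm (TT n) = Mo n" "cd (TT n) = Mo n" by (simp_all add: TT_def)
lemma TT_d: "cmp (d n i) (TT (Suc n)) = cmp (TT n) (d n i)" unfolding TT_def by (rule T_d)
lemma TT_s: "cmp (s n i) (TT n) = cmp (TT (Suc n)) (s n i)" unfolding TT_def by (rule T_s)
lemma TT_d_t: "ar x \<Longrightarrow> cd x = Mo (Suc n) \<Longrightarrow> cmp (d n i) (cmp (TT (Suc n)) x) = cmp (TT n) (cmp (d n i) x)"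
  by (rule tl[OF TT_d]) simp_all
lemma TT_s_t: "ar x \<Longrightarrow> cd x = Mo n \<Longrightarrow> cmp (TT (Suc n)) (cmp (s n i) x) = cmp (s n i) (cmp (TT n) x)"
  by (rule tl[OF TT_s[symmetric]]) simp_all

abbreviation "KP n j \<equiv> mpow C (Mo (Suc n)) (K (Suc n)) j"

lemma Zl: "1 \<le> i \<Longrightarrow> i + j \<le> n \<Longrightarrow> cmp (d n i) (cmp (KP n j) (cmp (sg n) (iota n))) = zer (N n) (Mo n)"
proof (induction j arbitrary: i)
  case 0
  obtain n' where n: "n = Suc n'" using 0 by (cases n) auto
  have e: "cmp (d n i) (sg n) = cmp (sg n') (d n' i)" using dsg_mid[of i n'] 0 n by simp
  have "cmp (d n i) (cmp (sg n) (iota n)) = cmp (sg n') (cmp (d n' i) (iota n))"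
    using tl[OF e, of "iota n"] n by simp
  then show ?case using d_iota[of i n'] 0 n by (simp add: id_l zer_r)
next
  case (Suc j)
  have "cmp (d n i) (cmp (KP n (Suc j)) (cmp (sg n) (iota n)))
      = cmp (cmp (d n i) (K (Suc n))) (cmp (KP n j) (cmp (sg n) (iota n)))" by (simp add: alg)
  also have "\<dots> = cmp (K n) (cmp (d n (Suc i)) (cmp (KP n j) (cmp (sg n) (iota n))))"
    using K1[of i n] Suc.prems by (simp add: alg)
  finally show ?case using Suc.IH[of "Suc i"] Suc.prems by (simp add: zer_r)
qed

lemma Yl: "j \<le> n \<Longrightarrow> cmp (d n 0) (cmp (KP n j) (cmp (sg n) (iota n))) = msgn C j (cmp (mpow C (Mo n) (t n) (Suc j)) (iota n))"
proof (induction j)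
  case 0 then show ?case by (simp add: alg M1[symmetric])
next
  case (Suc j)
  let ?Y = "cmp (KP n j) (cmp (sg n) (iota n))"
  have "cmp (d n 0) (cmp (KP n (Suc j)) (cmp (sg n) (iota n))) = cmp (cmp (d n 0) (K (Suc n))) ?Y"
    by (simp add: alg)
  also have "\<dots> = cmp (t n) (msub C (cmp (d n 1) ?Y) (cmp (d n 0) ?Y))" by (simp add: K3 alg)
  also have "\<dots> = ngt (cmp (t n) (msgn C j (cmp (mpow C (Mo n) (t n) (Suc j)) (iota n))))"
    using Zl[of 1 j n] Suc by (simp add: zer_sub ngt_r)
  finally show ?case by (simp add: alg msgn_Suc)
qed

lemma Xl: "j \<le> n \<Longrightarrow> cmp (r n) (cmp (d n 0) (cmp (KP n j) (cmp (sg n) (iota n)))) = msgn C j (cmp (mpow C (N n) (kk n) j) (th n))"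
proof (induction j)
  case 0 then show ?case by (simp add: alg M1t th_def)
next
  case (Suc j)
  let ?Y = "cmp (KP n j) (cmp (sg n) (iota n))"
  have "cmp (r n) (cmp (d n 0) (cmp (KP n (Suc j)) (cmp (sg n) (iota n)))) = cmp (r n) (cmp (cmp (d n 0) (K (Suc n))) ?Y)"
    by (simp add: alg)
  also have "\<dots> = cmp (r n) (cmp (cmp (K n) (msub C (d n 1) (d n 0))) ?Y)" by (simp only: K3 K3')
  also have "\<dots> = cmp (cmp (r n) (K n)) (msub C (cmp (d n 1) ?Y) (cmp (d n 0) ?Y))" by (simp add: alg)
  also have "\<dots> = ngt (cmp (kk n) (cmp (r n) (cmp (d n 0) ?Y)))"
    using Zl[of 1 j n] Suc by (simp add: zer_sub ngt_r N2 alg)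
  finally show ?case using Suc by (simp add: alg msgn_Suc)
qed

lemma piop_eq: "piop C Mo Mm n = msgn C n (cmp (d n 0) (cmp (KP n n) (sg n)))"
proof -
  have "mpow C (Mo (Suc n)) (kappa C Mm (Suc n)) n = KP n n"
    unfolding kappa_eq by (simp add: mpow_msgn msgn_even)
  then show ?thesis unfolding piop_def by simp
qed

lemma PiT: "cmp (piop C Mo Mm n) (iota n) = cmp (TT n) (iota n)"
proof -
  have "cmp (piop C Mo Mm n) (iota n) = msgn C n (cmp (d n 0) (cmp (KP n n) (cmp (sg n) (iota n))))"
    unfolding piop_eq by (simp add: alg)
  then show ?thesis using Yl[of n n] by (simp add: TT_def)
qed

lemma PiN: "cmp (r n) (cmp (piop C Mo Mm n) (iota n)) = cmp (mpow C (N n) (kk n) n) (th n)"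
proof -
  have "cmp (r n) (cmp (piop C Mo Mm n) (iota n)) = msgn C n (cmp (r n) (cmp (d n 0) (cmp (KP n n) (cmp (sg n) (iota n)))))"
    unfolding piop_eq by (simp add: alg)
  then show ?thesis using Xl[of n n] by simp
qed

definition "tau' n = cmp (r n) (cmp (TT n) (iota n))"

lemma tau'_ty[simp]: "ar (tau' n)" "dm (tau' n) = N n" "cd (tau' n) = N n" by (simp_all add: tau'_def)

lemma tau'_eq: "tau' n = cmp (mpow C (N n) (kk n) n) (th n)"
  unfolding tau'_def PiN[symmetric] PiT ..

lemma T_iota: "cmp (TT n) (iota n) = cmp (iota n) (tau' n)"
proof -
  have "cmp (iota n) (cmp (r n) (cmp (TT n) (iota n))) = cmp (TT n) (iota n)"
  proof (rule fixN)
    fix j m assume n: "n = Suc m" and j: "1 \<le> j" "j \<le> n"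
    have "cmp (d m j) (cmp (TT n) (iota n)) = cmp (TT m) (cmp (d m j) (iota n))"
      using TT_d_t[of "iota n" m j] n by simp
    then show "cmp (d m j) (cmp (TT n) (iota n)) = zer (dm (cmp (TT n) (iota n))) (Mo m)"
      using d_iota[of j m] j n by (simp add: zer_r)
  qed simp_all
  then show ?thesis unfolding tau'_def by simp
qed

lemma T_pf: "cmp (TT (Suc m)) (pf (Suc m) k) = cmp (pf (Suc m) k) (TT (Suc m))"
proof -
  have "cmp (TT (Suc m)) (cmp (s m (k-1)) (d m k)) = cmp (s m (k-1)) (cmp (d m k) (TT (Suc m)))"
    by (simp add: TT_s_t TT_d)
  then show ?thesis by (simp add: pf_Suc alg)
qed

lemma T_pp: "cmp (TT (Suc m)) (pp (Suc m) k) = cmp (pp (Suc m) k) (TT (Suc m))"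
proof (induction k)
  case 0 then show ?case by (simp add: alg)
next
  case (Suc k)
  have "cmp (TT (Suc m)) (pp (Suc m) (Suc k)) = cmp (cmp (TT (Suc m)) (pp (Suc m) k)) (pf (Suc m) (Suc k))"
    by (simp add: alg)
  also have "\<dots> = cmp (pp (Suc m) k) (cmp (TT (Suc m)) (pf (Suc m) (Suc k)))" unfolding Suc by (simp add: alg)
  also have "\<dots> = cmp (pp (Suc m) (Suc k)) (TT (Suc m))" unfolding T_pf by (simp add: alg)
  finally show ?case .
qed

lemma T_P: "cmp (TT n) (P n) = cmp (P n) (TT n)"
proof (cases n)
  case 0 then show ?thesis by (simp add: pmap_def alg)
next
  case (Suc m) then show ?thesis by (simp only: pmap_def T_pp)
qed

lemma r_T: "cmp (r n) (TT n) = cmp (tau' n) (r n)"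
proof -
  have "cmp (r n) (TT n) = cmp (cmp (r n) (P n)) (TT n)" by (simp only: r_P)
  also have "\<dots> = cmp (r n) (cmp (P n) (TT n))" by (simp add: alg)
  also have "\<dots> = cmp (r n) (cmp (TT n) (cmp (iota n) (r n)))" by (simp add: T_P[symmetric] iota_r)
  also have "\<dots> = cmp (tau' n) (r n)" by (simp add: tau'_def alg)
  finally show ?thesis .
qed

end


context PA begin

lemma pls_sub_cancel: "ar x \<Longrightarrow> ar y \<Longrightarrow> dm x = dm y \<Longrightarrow> cd x = cd y \<Longrightarrow> pls x (msub C y x) = y"
  by (subst pls_comm) (simp_all add: sub_pls_cancel)

end

context DUP begin

lemma cyc_step:
  assumes IH: "\<And>m. n = Suc m \<Longrightarrow> TT m = one m" and tau: "tau' n = eN n"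
  shows "TT n = one n"
proof -
  let ?X = "msub C (TT n) (one n)"
  have XP: "cmp ?X (P n) = ?X"
  proof (cases n)
    case 0 then show ?thesis by (simp add: pmap_def alg)
  next
    case (Suc m)
    show ?thesis unfolding Suc
    proof (rule D4)
      fix j assume "j \<le> m"
      have "cmp (msub C (TT (Suc m)) (one (Suc m))) (s m j) = msub C (cmp (s m j) (TT m)) (s m j)"
        by (simp add: alg TT_s)
      then show "cmp (msub C (TT (Suc m)) (one (Suc m))) (s m j) = zer (Mo m) (cd (msub C (TT (Suc m)) (one (Suc m))))"
        using IH[OF Suc] by (simp add: alg sub_self)
    qed simp_all
  qed
  have "?X = cmp ?X (cmp (iota n) (r n))" using XP by (simp add: iota_r)
  also have "\<dots> = cmp (msub C (cmp (TT n) (iota n)) (iota n)) (r n)" by (simp add: alg)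
  also have "\<dots> = zer (Mo n) (Mo n)" unfolding T_iota tau by (simp add: alg sub_self)
  finally have Z: "?X = zer (Mo n) (Mo n)" .
  show ?thesis by (rule sub_eq_zer) (simp_all add: Z)
qed

lemma rpi: "cmp (r n) (cmp (piop C Mo Mm n) (iota n)) = tau' n"
  unfolding tau'_def PiT ..

lemma cyc_iff: "cyclic C Mo Mm \<longleftrightarrow> (\<forall>n. cmp (r n) (cmp (piop C Mo Mm n) (iota n)) = eN n)"
proof
  assume c: "cyclic C Mo Mm"
  have "TT n = one n" for n using c unfolding cyclic_def TT_def by simp
  then show "\<forall>n. cmp (r n) (cmp (piop C Mo Mm n) (iota n)) = eN n"
    by (simp add: rpi tau'_def alg r_iota)
next
  assume a: "\<forall>n. cmp (r n) (cmp (piop C Mo Mm n) (iota n)) = eN n"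
  have "TT n = one n" for n
  proof (induction n rule: less_induct)
    case (less n)
    show ?case
    proof (rule cyc_step)
      show "TT m = one m" if "n = Suc m" for m using less that by simp
      show "tau' n = eN n" using a rpi[of n] by simp
    qed
  qed
  then show "cyclic C Mo Mm" unfolding cyclic_def TT_def by simp
qed

lemma rkappa: "cmp (r n) (cmp (kappa C Mm n) (iota n)) = msgn C n (kk n)"
  unfolding kappa_eq kk_def by (simp add: alg)

lemma TT_t: "invertible C (Mo n) (TT n) \<Longrightarrow> invertible C (Mo n) (t n)"
  by (rule invertible_factor[of _ _ "mpow C (Mo n) (t n) n"])
     (simp_all add: hom_iff TT_def mpow_comm)

lemma t_TT: "invertible C (Mo n) (t n) \<Longrightarrow> invertible C (Mo n) (TT n)"
  unfolding TT_def by (rule invertible_mpow)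

lemma tau_TT: assumes "invertible C (Mo n) (TT n)" shows "invertible C (N n) (tau' n)"
proof -
  obtain g where g: "g \<in> hom C (Mo n) (Mo n)" "cmp g (TT n) = one n" "cmp (TT n) g = one n"
    using assms unfolding invertible_def by blast
  have ty: "ar g" "dm g = Mo n" "cd g = Mo n" using g by (auto simp: hom_iff)
  have gt: "cmp g (cmp (TT n) x) = x" if "ar x" "cd x = Mo n" for x
    using that ty g(2) by (simp add: assoc[symmetric] id_l)
  have tg: "cmp (TT n) (cmp g x) = x" if "ar x" "cd x = Mo n" for x
    using that ty g(3) by (simp add: assoc[symmetric] id_l)
  let ?v = "cmp (r n) (cmp g (iota n))"
  show ?thesis
  proof (rule invertibleI2[of _ _ ?v ?v])
    have "cmp ?v (tau' n) = cmp (r n) (cmp g (cmp (P n) (cmp (TT n) (iota n))))"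
      using ty by (simp add: tau'_def alg iota_r[symmetric])
    also have "cmp (P n) (cmp (TT n) (iota n)) = cmp (TT n) (cmp (P n) (iota n))"
      by (rule tl[OF T_P[symmetric]]) simp_all
    finally show "cmp ?v (tau' n) = eN n" using ty by (simp add: gt P_iota r_iota)
    have "cmp (tau' n) ?v = cmp (r n) (cmp (TT n) (cmp (P n) (cmp g (iota n))))"
      using ty by (simp add: tau'_def alg iota_r[symmetric])
    also have "cmp (TT n) (cmp (P n) (cmp g (iota n))) = cmp (P n) (cmp (TT n) (cmp g (iota n)))"
      by (rule tl[OF T_P]) (simp_all add: ty)
    also have "cmp (r n) (cmp (P n) (cmp (TT n) (cmp g (iota n)))) = cmp (cmp (r n) (P n)) (cmp (TT n) (cmp g (iota n)))"
      using ty by (simp add: alg)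
    also have "\<dots> = cmp (r n) (cmp (TT n) (cmp g (iota n)))" unfolding r_P ..
    finally show "cmp (tau' n) ?v = eN n" using ty by (simp add: tg r_iota)
  qed (use ty in \<open>auto simp: hom_iff\<close>)
qed

lemma th_eq: "th n = pls (cmp (b n) (BB n)) (msgn C n (eN n))"
  unfolding N9 by (simp add: sub_pls_cancel)

lemma kk_b: "cmp (kk n) (b n) = ngt (cmp (b n) (kk (Suc n)))"
  by (simp add: N4)
lemma kk_B: "cmp (kk (Suc n)) (BB n) = ngt (cmp (BB n) (kk n))"
  by (simp add: N5)

lemma th_comm: "cmp (kk n) (th n) = cmp (th n) (kk n)"
proof -
  have "cmp (kk n) (cmp (b n) (BB n)) = cmp (cmp (b n) (BB n)) (kk n)"
  proof -
    have "cmp (kk n) (cmp (b n) (BB n)) = cmp (cmp (kk n) (b n)) (BB n)" by (simp add: alg)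
    also have "\<dots> = ngt (cmp (b n) (cmp (kk (Suc n)) (BB n)))" unfolding kk_b by (simp add: alg)
    also have "\<dots> = cmp (cmp (b n) (BB n)) (kk n)" unfolding kk_B by (simp add: alg)
    finally show ?thesis .
  qed
  then show ?thesis unfolding th_eq by (simp add: dist_l dist_r msgn_l msgn_r id_l id_r)
qed

lemma kk_tau: assumes "invertible C (N n) (tau' n)" shows "invertible C (N n) (kk n)"
proof (cases n)
  case 0 then show ?thesis using assms by (simp add: tau'_eq N8_0 id_l)
next
  case (Suc m)
  let ?V = "cmp (mpow C (N n) (kk n) m) (th n)"
  show ?thesis
  proof (rule invertible_factor[of _ _ ?V])
    have mp: "mpow C (N n) (kk n) n = cmp (kk n) (mpow C (N n) (kk n) m)" using Suc by simp
    show "cmp (kk n) ?V = tau' n" unfolding tau'_eq mp by (simp add: alg)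
    have c: "cmp (mpow C (N n) (kk n) m) (kk n) = cmp (kk n) (mpow C (N n) (kk n) m)"
      by (rule mpow_comm) simp_all
    have "cmp ?V (kk n) = cmp (mpow C (N n) (kk n) m) (cmp (th n) (kk n))" by (simp add: alg)
    also have "\<dots> = cmp (cmp (mpow C (N n) (kk n) m) (kk n)) (th n)" by (simp add: alg th_comm)
    also have "\<dots> = tau' n" unfolding tau'_eq mp c by (simp add: alg)
    finally show "cmp ?V (kk n) = tau' n" .
  qed (use assms in \<open>auto simp: hom_iff\<close>)
qed

lemma tau_kk: "invertible C (N n) (kk n) \<Longrightarrow> invertible C (N n) (th n) \<Longrightarrow> invertible C (N n) (tau' n)"
  unfolding tau'_eq by (intro invertible_cmp invertible_mpow)

end


context DUP begin

lemma N6t: "ar x \<Longrightarrow> cd x = N (Suc (Suc m)) \<Longrightarrow> cmp (b m) (cmp (b (Suc m)) x) = zer (dm x) (N m)"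
  by (simp add: assoc[symmetric] N6 zer_l)
lemma N7t: "ar x \<Longrightarrow> cd x = N m \<Longrightarrow> cmp (BB (Suc m)) (cmp (BB m) x) = zer (dm x) (N (Suc (Suc m)))"
  by (simp add: assoc[symmetric] N7 zer_l)

lemma th_from_kk:
  assumes inv: "invertible C (N (Suc m)) (kk (Suc m))"
  shows "invertible C (N m) (th m)"
proof -
  let ?a = "eN (Suc m)"
  let ?X = "cmp (b (Suc m)) (BB (Suc m))"
  let ?Y = "cmp (BB m) (b m)"
  let ?x = "pls ?a (msgn C m ?Y)"
  let ?y = "msub C ?a (msgn C m ?X)"
  let ?z = "msgn C (Suc m) (kk (Suc m))"
  have kk: "kk (Suc m) = msub C (pls ?X (msgn C (Suc m) ?a)) ?Y" unfolding N8 th_eq ..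
  have xy: "cmp ?x ?y = ?z"
    unfolding kk by (cases "even m") (simp_all add: msgn_def msub_def algp ngt_pls pls_ac N6t N7t pls_zer zer_pls ngt_zer)
  have yx: "cmp ?y ?x = ?z"
    unfolding kk by (cases "even m") (simp_all add: msgn_def msub_def algp ngt_pls pls_ac N6t N7t pls_zer zer_pls ngt_zer)
  have ix: "invertible C (N (Suc m)) ?x"
    by (rule invertible_factor[OF _ _ xy yx]) (simp_all add: hom_iff invertible_msgn inv)
  have ix': "invertible C (N (Suc m)) (pls ?a (cmp (BB m) (msgn C m (b m))))"
    using ix by (simp add: msgn_r)
  have "invertible C (N m) (pls (eN m) (cmp (msgn C m (b m)) (BB m)))"
    by (rule one_plus_inv[OF _ _ ix']) (simp_all add: hom_iff)
  then have "invertible C (N m) (msgn C m (pls (eN m) (cmp (msgn C m (b m)) (BB m))))"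
    by (simp add: invertible_msgn)
  moreover have "msgn C m (pls (eN m) (cmp (msgn C m (b m)) (BB m))) = th m"
    unfolding th_eq by (simp add: msgn_pls msgn_l pls_comm)
  ultimately show ?thesis by simp
qed

primrec Zs :: "nat \<Rightarrow> 'm \<Rightarrow> nat \<Rightarrow> 'm" where
  "Zs m U 0 = zer (Mo (Suc m)) (Mo (Suc m))"
| "Zs m U (Suc k) = pls (Zs m U k) (cmp (pp (Suc m) k) (cmp (s m k) (cmp U (d m (Suc k)))))"

lemma Zs_ty: "ar U \<Longrightarrow> dm U = Mo m \<Longrightarrow> cd U = Mo m \<Longrightarrow> ar (Zs m U k) \<and> dm (Zs m U k) = Mo (Suc m) \<and> cd (Zs m U k) = Mo (Suc m)"
  by (induction k) simp_all

lemma T_pp_t: "ar x \<Longrightarrow> cd x = Mo (Suc m) \<Longrightarrow> cmp (TT (Suc m)) (cmp (pp (Suc m) k) x) = cmp (pp (Suc m) k) (cmp (TT (Suc m)) x)"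
  by (rule tl[OF T_pp]) simp_all

lemma Zs_T:
  assumes U: "ar U" "dm U = Mo m" "cd U = Mo m" "cmp U (TT m) = one m" "cmp (TT m) U = one m"
  shows "k \<le> Suc m \<Longrightarrow> cmp (TT (Suc m)) (Zs m U k) = msub C (one (Suc m)) (pp (Suc m) k)
     \<and> cmp (Zs m U k) (TT (Suc m)) = msub C (one (Suc m)) (pp (Suc m) k)"
proof (induction k)
  case 0 then show ?case using U by (simp add: zer_r zer_l sub_self)
next
  case (Suc k)
  have ty: "ar (Zs m U k)" "dm (Zs m U k) = Mo (Suc m)" "cd (Zs m U k) = Mo (Suc m)" using Zs_ty[OF U(1-3)] by auto
  have UT: "cmp U (cmp (TT m) x) = x" if "ar x" "cd x = Mo m" for x
    using that U by (simp add: assoc[symmetric] id_l)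
  have TU: "cmp (TT m) (cmp U x) = x" if "ar x" "cd x = Mo m" for x
    using that U by (simp add: assoc[symmetric] id_l)
  have e: "msub C (one (Suc m)) (pp (Suc m) (Suc k)) =
     pls (msub C (one (Suc m)) (pp (Suc m) k)) (cmp (pp (Suc m) k) (cmp (s m k) (d m (Suc k))))"
    by (simp add: pf_Suc msub_def algp ngt_pls pls_ac)
  have a: "cmp (TT (Suc m)) (cmp (pp (Suc m) k) (cmp (s m k) (cmp U (d m (Suc k)))))
      = cmp (pp (Suc m) k) (cmp (s m k) (d m (Suc k)))"
    using U by (simp add: T_pp_t TT_s_t TU)
  have b: "cmp (cmp (pp (Suc m) k) (cmp (s m k) (cmp U (d m (Suc k))))) (TT (Suc m))
      = cmp (pp (Suc m) k) (cmp (s m k) (d m (Suc k)))"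
    using U by (simp add: algp TT_d UT)
  show ?case using Suc ty U unfolding e by (simp add: dist_l dist_r a b)
qed

lemma TT_from_tau:
  assumes inv: "invertible C (N n) (tau' n)" and IH: "\<And>m. n = Suc m \<Longrightarrow> invertible C (Mo m) (TT m)"
  shows "invertible C (Mo n) (TT n)"
proof -
  obtain w where w: "w \<in> hom C (N n) (N n)" "cmp w (tau' n) = eN n" "cmp (tau' n) w = eN n"
    using inv unfolding invertible_def by blast
  have wty: "ar w" "dm w = N n" "cd w = N n" using w by (auto simp: hom_iff)
  let ?A = "cmp (iota n) (cmp w (r n))"
  have A1: "cmp (TT n) ?A = P n"
  proof -
    have "cmp (TT n) ?A = cmp (cmp (cmp (TT n) (iota n)) w) (r n)" using wty by (simp add: algp)
    also have "\<dots> = cmp (iota n) (cmp (cmp (tau' n) w) (r n))" unfolding T_iota using wty by (simp add: algp)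
    finally show ?thesis using wty w by (simp add: algp iota_r)
  qed
  have A2: "cmp ?A (TT n) = P n"
  proof -
    have "cmp ?A (TT n) = cmp (iota n) (cmp w (cmp (r n) (TT n)))" using wty by (simp add: algp)
    also have "\<dots> = cmp (iota n) (cmp (cmp w (tau' n)) (r n))" unfolding r_T using wty by (simp add: algp)
    finally show ?thesis using wty w by (simp add: algp iota_r)
  qed
  have Aty: "ar ?A" "dm ?A = Mo n" "cd ?A = Mo n" using wty by simp_all
  show ?thesis
  proof (cases n)
    case 0
    have P0: "P n = one n" using 0 by (simp add: pmap_def)
    show ?thesis by (rule invertibleI2[of _ _ ?A ?A]) (use A1 A2 Aty P0 in \<open>auto simp: hom_iff\<close>)
  next
    case (Suc m)
    obtain U where U: "U \<in> hom C (Mo m) (Mo m)" "cmp U (TT m) = one m" "cmp (TT m) U = one m"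
      using IH[OF Suc] unfolding invertible_def by blast
    have Uty: "ar U" "dm U = Mo m" "cd U = Mo m" using U by (auto simp: hom_iff)
    have Z: "cmp (TT n) (Zs m U (Suc m)) = msub C (one n) (P n)" "cmp (Zs m U (Suc m)) (TT n) = msub C (one n) (P n)"
      using Zs_T[OF Uty U(2,3), of "Suc m"] Suc by (simp_all add: pmap_def del: pprod.simps)
    have Zty: "ar (Zs m U (Suc m))" "dm (Zs m U (Suc m)) = Mo n" "cd (Zs m U (Suc m)) = Mo n"
      using Zs_ty[OF Uty, of "Suc m"] Suc by auto
    let ?V = "pls ?A (Zs m U (Suc m))"
    show ?thesis
    proof (rule invertibleI2[of _ _ ?V ?V])
      show "cmp ?V (TT n) = one n" using Aty Zty by (simp add: dist_r A2 Z pls_sub_cancel del: Zs.simps)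
      show "cmp (TT n) ?V = one n" using Aty Zty by (simp add: dist_l A1 Z pls_sub_cancel del: Zs.simps)
    qed (use Aty Zty in \<open>auto simp: hom_iff\<close>)
  qed
qed

lemma para_iff: "paracyclic C Mo Mm \<longleftrightarrow> (\<forall>n. invertible C (N n) (cmp (r n) (cmp (kappa C Mm n) (iota n))))"
proof
  assume p: "paracyclic C Mo Mm"
  show "\<forall>n. invertible C (N n) (cmp (r n) (cmp (kappa C Mm n) (iota n)))"
  proof
    fix n
    have "invertible C (Mo n) (t n)" using p unfolding paracyclic_def by blast
    then have "invertible C (N n) (kk n)" by (intro kk_tau tau_TT t_TT)
    then show "invertible C (N n) (cmp (r n) (cmp (kappa C Mm n) (iota n)))"
      unfolding rkappa by (simp add: invertible_msgn)
  qed
next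
  assume a: "\<forall>n. invertible C (N n) (cmp (r n) (cmp (kappa C Mm n) (iota n)))"
  have k: "invertible C (N n) (kk n)" for n using a[rule_format, of n] unfolding rkappa by (simp add: invertible_msgn)
  have th: "invertible C (N n) (th n)" for n using th_from_kk[OF k[of "Suc n"]] .
  have T: "invertible C (Mo n) (TT n)" for n
  proof (induction n rule: less_induct)
    case (less n)
    show ?case by (rule TT_from_tau) (use less tau_kk[OF k th] in auto)
  qed
  show "paracyclic C Mo Mm" unfolding paracyclic_def using TT_t[OF T] by blast
qed

end


theorem mainTheorem1:
  fixes C :: "('o, 'm) cat_data"
    and Mo :: "nat \<Rightarrow> 'o" and Mm :: "nat \<Rightarrow> nat \<Rightarrow> (int \<Rightarrow> int) \<Rightarrow> 'm"
    and N :: "nat \<Rightarrow> 'o" and iota :: "nat \<Rightarrow> 'm" and r :: "nat \<Rightarrow> 'm"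
  assumes "additive_cat C"
    and "weakly_idem_complete C"
    and "duplicial C Mo Mm"
    and "\<forall>n. N n \<in> c_ob C \<and> iota n \<in> hom C (N n) (Mo n) \<and> r n \<in> hom C (Mo n) (N n)
              \<and> c_cmp C (r n) (iota n) = c_idt C (N n)
              \<and> c_cmp C (iota n) (r n) = pmap C Mo Mm n"
  shows "(paracyclic C Mo Mm \<longleftrightarrow>
           (\<forall>n. invertible C (N n) (c_cmp C (r n) (c_cmp C (kappa C Mm n) (iota n)))))
       \<and> (cyclic C Mo Mm \<longleftrightarrow>
           (\<forall>n. c_cmp C (r n) (c_cmp C (piop C Mo Mm n) (iota n)) = c_idt C (N n)))"
proof -
  have pre: "preadditive C" using assms(1) unfolding additive_cat_def by blast
  interpret X: DUP C Mo Mm N iota r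
    by (unfold_locales) (use pre assms(3,4) in auto)
  show ?thesis using X.para_iff X.cyc_iff by simp
qed

end
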